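(* Let $\mathcal M$ be a Polish metric structure and $\mathcal N$ a good countable approximating substructure of $\mathcal M$. Then for every $n$ and every co-meagre $A\subseteq\mathrm{Aut}(\mathcal N)^n$, the $\partial$-closure $\overline{A}^\partial$ computed in $\mathrm{Aut}(\mathcal M)^n$ is co-meagre in $\mathrm{Aut}(\mathcal M)^n$. In particular, if $\mathrm{Aut}(\mathcal N)$ has ample generics then the topometric group $(\mathrm{Aut}(\mathcal M),\tau,\partial)$ has ample generics.
   Context: A metric structure $\mathcal M$ is a complete bounded metric space $(M,d)$ with a family of uniformly continuous bounded predicates $P_i\colon M^{k_i}\to\mathbb R$ (including $d$) and uniformly continuous functions $f_j\colon M^{\ell_j}\to M$; it is Polish if $M$ is separable. $\mathrm{Aut}(\mathcal M)$ is the group of bijections preserving all predicates and functions, with $\tau$ the topology of pointwise convergence and $\partial(g,h)=\sup_{x\in M}d(gx,hx)$ the metric of uniform convergence; on $\mathrm{Aut}(\mathcal M)^n$ use the product topology and supremum metric. For $B$ in a metric space, $(B)_\varepsilon=\{y\colon\partial(y,B)<\varepsilon\}$. A countable (classical) structure $\mathcal N$ is a countable approximating substructure of $\mathcal M$ if its universe $N$ is a countable dense subset of $(M,d)$, every automorphism of $\mathcal N$ extends (uniquely) to an automorphism of $\mathcal M$, and $\mathrm{Aut}(\mathcal N)$ is dense in $\mathrm{Aut}(\mathcal M)$; $\mathrm{Aut}(\mathcal N)$ carries the topology of pointwise convergence on the discrete set $N$. It is good if moreover for every open $U\subseteq\mathrm{Aut}(\mathcal N)$ (in the topology of $\mathrm{Aut}(\mathcal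 N)$) and $\varepsilon>0$, the set $(U)_\varepsilon$ computed in $(\mathrm{Aut}(\mathcal M),\partial)$ is $\tau$-open. A Polish group $K$ has ample generics if for every $n$ there is $\bar g\in K^n$ whose diagonal conjugacy class $\{(kg_0k^{-1},\dots,kg_{n-1}k^{-1})\colon k\in K\}$ is co-meagre in $K^n$. A topometric group $(G,\tau,\partial)$ has ample generics if for every $n$ and $\varepsilon>0$ there is $\bar g\in G^n$ whose diagonal conjugacy class $C$ satisfies that $(C)_\varepsilon$ is co-meagre in $(G^n,\tau)$. *)

theory Defs
  imports "HOL-Analysis.Analysis"
begin

definition nowhere_dense_in :: "'a topology \<Rightarrow> 'a set \<Rightarrow> bool" where
  "nowhere_dense_in X S \<longleftrightarrow> S \<subseteq> topspace X \<and> X interior_of (X closure_of S) = {}"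

definition meagre_in :: "'a topology \<Rightarrow> 'a set \<Rightarrow> bool" where
  "meagre_in X S \<longleftrightarrow>
     (\<exists>\<F>. countable \<F> \<and> (\<forall>T\<in>\<F>. nowhere_dense_in X T) \<and> S \<subseteq> \<Union>\<F>)"

definition comeagre_in :: "'a topology \<Rightarrow> 'a set \<Rightarrow> bool" where
  "comeagre_in X S \<longleftrightarrow> S \<subseteq> topspace X \<and> meagre_in X (topspace X - S)"

text \<open>The universe of the metric structure is the whole type 'a, with metric d.
  Predicates are indexed by 'i, P i has arity arP i and is applied to lists of that length;
  functions are indexed by 'j, f j has arity arF j.\<close>

definition unif_cont_pred :: "('a \<Rightarrow> 'a \<Rightarrow> real) \<Rightarrow> nat \<Rightarrow> ('a list \<Rightarrow> real) \<Rightarrow> bool" where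
  "unif_cont_pred d k P \<longleftrightarrow>
     (\<forall>\<epsilon>>0. \<exists>\<delta>>0. \<forall>xs ys. length xs = k \<longrightarrow> length ys = k \<longrightarrow>
        (\<forall>i<k. d (xs ! i) (ys ! i) < \<delta>) \<longrightarrow> \<bar>P xs - P ys\<bar> < \<epsilon>)"

definition unif_cont_fun :: "('a \<Rightarrow> 'a \<Rightarrow> real) \<Rightarrow> nat \<Rightarrow> ('a list \<Rightarrow> 'a) \<Rightarrow> bool" where
  "unif_cont_fun d k f \<longleftrightarrow>
     (\<forall>\<epsilon>>0. \<exists>\<delta>>0. \<forall>xs ys. length xs = k \<longrightarrow> length ys = k \<longrightarrow>
        (\<forall>i<k. d (xs ! i) (ys ! i) < \<delta>) \<longrightarrow> d (f xs) (f ys) < \<epsilon>)"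

definition metric_structure ::
  "('a \<Rightarrow> 'a \<Rightarrow> real) \<Rightarrow> ('i \<Rightarrow> nat) \<Rightarrow> ('i \<Rightarrow> 'a list \<Rightarrow> real)
    \<Rightarrow> ('j \<Rightarrow> nat) \<Rightarrow> ('j \<Rightarrow> 'a list \<Rightarrow> 'a) \<Rightarrow> bool" where
  "metric_structure d arP P arF f \<longleftrightarrow>
     Metric_space UNIV d \<and> Metric_space.mcomplete UNIV d \<and>
     (\<exists>B. \<forall>x y. d x y \<le> B) \<and>
     (\<forall>i. unif_cont_pred d (arP i) (P i) \<and>
          (\<exists>B. \<forall>xs. length xs = arP i \<longrightarrow> \<bar>P i xs\<bar> \<le> B)) \<and>
     (\<forall>j. unif_cont_fun d (arF j) (f j))"

definition polish_metric_structure ::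
  "('a \<Rightarrow> 'a \<Rightarrow> real) \<Rightarrow> ('i \<Rightarrow> nat) \<Rightarrow> ('i \<Rightarrow> 'a list \<Rightarrow> real)
    \<Rightarrow> ('j \<Rightarrow> nat) \<Rightarrow> ('j \<Rightarrow> 'a list \<Rightarrow> 'a) \<Rightarrow> bool" where
  "polish_metric_structure d arP P arF f \<longleftrightarrow>
     metric_structure d arP P arF f \<and> separable_space (Metric_space.mtopology UNIV d)"

definition AutM ::
  "('a \<Rightarrow> 'a \<Rightarrow> real) \<Rightarrow> ('i \<Rightarrow> nat) \<Rightarrow> ('i \<Rightarrow> 'a list \<Rightarrow> real)
    \<Rightarrow> ('j \<Rightarrow> nat) \<Rightarrow> ('j \<Rightarrow> 'a list \<Rightarrow> 'a) \<Rightarrow> ('a \<Rightarrow> 'a) set" where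
  "AutM d arP P arF f =
     {g. bij g \<and> (\<forall>x y. d (g x) (g y) = d x y) \<and>
         (\<forall>i xs. length xs = arP i \<longrightarrow> P i (map g xs) = P i xs) \<and>
         (\<forall>j xs. length xs = arF j \<longrightarrow> g (f j xs) = f j (map g xs))}"

definition tauM ::
  "('a \<Rightarrow> 'a \<Rightarrow> real) \<Rightarrow> ('i \<Rightarrow> nat) \<Rightarrow> ('i \<Rightarrow> 'a list \<Rightarrow> real)
    \<Rightarrow> ('j \<Rightarrow> nat) \<Rightarrow> ('j \<Rightarrow> 'a list \<Rightarrow> 'a) \<Rightarrow> ('a \<Rightarrow> 'a) topology" where
  "tauM d arP P arF f =
     subtopology (product_topology (\<lambda>_. Metric_space.mtopology UNIV d) UNIV) (AutM d arP P arF f)"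

definition unif_dist :: "('a \<Rightarrow> 'a \<Rightarrow> real) \<Rightarrow> ('a \<Rightarrow> 'a) \<Rightarrow> ('a \<Rightarrow> 'a) \<Rightarrow> real" where
  "unif_dist d g h = (SUP x. d (g x) (h x))"

text \<open>n-tuples are functions on {..<n} (extensional), with the product topology and the
  supremum metric (with the convention that the empty supremum is 0).\<close>

definition tuple_dist ::
  "('a \<Rightarrow> 'a \<Rightarrow> real) \<Rightarrow> nat \<Rightarrow> (nat \<Rightarrow> 'a \<Rightarrow> 'a) \<Rightarrow> (nat \<Rightarrow> 'a \<Rightarrow> 'a) \<Rightarrow> real" where
  "tuple_dist d n gs hs = Sup (insert 0 ((\<lambda>i. unif_dist d (gs i) (hs i)) ` {..<n}))"

definition power_top :: "'b topology \<Rightarrow> nat \<Rightarrow> (nat \<Rightarrow> 'b) topology" where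
  "power_top X n = product_topology (\<lambda>_. X) {..<n}"

definition tuple_nbhd ::
  "('a \<Rightarrow> 'a \<Rightarrow> real) \<Rightarrow> ('a \<Rightarrow> 'a) set \<Rightarrow> nat \<Rightarrow> (nat \<Rightarrow> 'a \<Rightarrow> 'a) set \<Rightarrow> real
    \<Rightarrow> (nat \<Rightarrow> 'a \<Rightarrow> 'a) set" where
  "tuple_nbhd d G n B \<epsilon> =
     {y \<in> PiE {..<n} (\<lambda>_. G). \<exists>b\<in>B. tuple_dist d n y b < \<epsilon>}"

definition tuple_dclosure ::
  "('a \<Rightarrow> 'a \<Rightarrow> real) \<Rightarrow> ('a \<Rightarrow> 'a) set \<Rightarrow> nat \<Rightarrow> (nat \<Rightarrow> 'a \<Rightarrow> 'a) set
    \<Rightarrow> (nat \<Rightarrow> 'a \<Rightarrow> 'a) set" where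
  "tuple_dclosure d G n B =
     {y \<in> PiE {..<n} (\<lambda>_. G). \<forall>\<epsilon>>0. \<exists>b\<in>B. tuple_dist d n y b < \<epsilon>}"

text \<open>Its automorphisms
  are represented as maps N \<rightarrow> N that are extensional outside N.\<close>

definition classical_structure ::
  "'a set \<Rightarrow> ('r \<Rightarrow> nat) \<Rightarrow> ('r \<Rightarrow> 'a list \<Rightarrow> bool)
    \<Rightarrow> ('k \<Rightarrow> nat) \<Rightarrow> ('k \<Rightarrow> 'a list \<Rightarrow> 'a) \<Rightarrow> bool" where
  "classical_structure N arR R arF F \<longleftrightarrow>
     (\<forall>k xs. set xs \<subseteq> N \<longrightarrow> length xs = arF k \<longrightarrow> F k xs \<in> N)"

definition AutN ::
  "'a set \<Rightarrow> ('r \<Rightarrow> nat) \<Rightarrow> ('r \<Rightarrow> 'a list \<Rightarrow> bool)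
    \<Rightarrow> ('k \<Rightarrow> nat) \<Rightarrow> ('k \<Rightarrow> 'a list \<Rightarrow> 'a) \<Rightarrow> ('a \<Rightarrow> 'a) set" where
  "AutN N arR R arF F =
     {h \<in> extensional N. bij_betw h N N \<and>
        (\<forall>r xs. set xs \<subseteq> N \<longrightarrow> length xs = arR r \<longrightarrow> (R r (map h xs) \<longleftrightarrow> R r xs)) \<and>
        (\<forall>k xs. set xs \<subseteq> N \<longrightarrow> length xs = arF k \<longrightarrow> h (F k xs) = F k (map h xs))}"

definition tauN ::
  "'a set \<Rightarrow> ('r \<Rightarrow> nat) \<Rightarrow> ('r \<Rightarrow> 'a list \<Rightarrow> bool)
    \<Rightarrow> ('k \<Rightarrow> nat) \<Rightarrow> ('k \<Rightarrow> 'a list \<Rightarrow> 'a) \<Rightarrow> ('a \<Rightarrow> 'a) topology" where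
  "tauN N arR R arF F =
     subtopology (product_topology (\<lambda>_. discrete_topology N) N) (AutN N arR R arF F)"

definition ext_aut :: "('a \<Rightarrow> 'a) set \<Rightarrow> 'a set \<Rightarrow> ('a \<Rightarrow> 'a) \<Rightarrow> ('a \<Rightarrow> 'a)" where
  "ext_aut G N h = (THE g. g \<in> G \<and> (\<forall>x\<in>N. g x = h x))"

definition countable_approx_substructure ::
  "('a \<Rightarrow> 'a \<Rightarrow> real) \<Rightarrow> ('i \<Rightarrow> nat) \<Rightarrow> ('i \<Rightarrow> 'a list \<Rightarrow> real)
    \<Rightarrow> ('j \<Rightarrow> nat) \<Rightarrow> ('j \<Rightarrow> 'a list \<Rightarrow> 'a)
    \<Rightarrow> 'a set \<Rightarrow> ('r \<Rightarrow> nat) \<Rightarrow> ('r \<Rightarrow> 'a list \<Rightarrow> bool)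
    \<Rightarrow> ('k \<Rightarrow> nat) \<Rightarrow> ('k \<Rightarrow> 'a list \<Rightarrow> 'a) \<Rightarrow> bool" where
  "countable_approx_substructure d arP P arF f N arR R arG F \<longleftrightarrow>
     classical_structure N arR R arG F \<and> countable N \<and>
     (\<forall>x. \<forall>\<epsilon>>0. \<exists>y\<in>N. d x y < \<epsilon>) \<and>
     (\<forall>h\<in>AutN N arR R arG F. \<exists>!g. g \<in> AutM d arP P arF f \<and> (\<forall>x\<in>N. g x = h x)) \<and>
     (tauM d arP P arF f) closure_of
        (ext_aut (AutM d arP P arF f) N ` AutN N arR R arG F) = AutM d arP P arF f"

definition good_approx_substructure ::
  "('a \<Rightarrow> 'a \<Rightarrow> real) \<Rightarrow> ('i \<Rightarrow> nat) \<Rightarrow> ('i \<Rightarrow> 'a list \<Rightarrow> real)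
    \<Rightarrow> ('j \<Rightarrow> nat) \<Rightarrow> ('j \<Rightarrow> 'a list \<Rightarrow> 'a)
    \<Rightarrow> 'a set \<Rightarrow> ('r \<Rightarrow> nat) \<Rightarrow> ('r \<Rightarrow> 'a list \<Rightarrow> bool)
    \<Rightarrow> ('k \<Rightarrow> nat) \<Rightarrow> ('k \<Rightarrow> 'a list \<Rightarrow> 'a) \<Rightarrow> bool" where
  "good_approx_substructure d arP P arF f N arR R arG F \<longleftrightarrow>
     countable_approx_substructure d arP P arF f N arR R arG F \<and>
     (\<forall>U \<epsilon>. openin (tauN N arR R arG F) U \<longrightarrow> \<epsilon> > 0 \<longrightarrow>
        openin (tauM d arP P arF f)
          {y \<in> AutM d arP P arF f.
             \<exists>u\<in>ext_aut (AutM d arP P arF f) N ` U. unif_dist d y u < \<epsilon>})"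

text \<open>Diagonal conjugacy classes.  In Aut(N) (maps extensional outside N) conjugation is
  k \<circ> g \<circ> k^{-1} restricted to N; in Aut(M) it is k \<circ> g \<circ> k^{-1} on the whole type.\<close>

definition diag_conj_classN :: "('a \<Rightarrow> 'a) set \<Rightarrow> 'a set \<Rightarrow> nat \<Rightarrow> (nat \<Rightarrow> 'a \<Rightarrow> 'a)
    \<Rightarrow> (nat \<Rightarrow> 'a \<Rightarrow> 'a) set" where
  "diag_conj_classN K N n gs =
     {(\<lambda>i\<in>{..<n}. restrict (k \<circ> gs i \<circ> inv_into N k) N) | k. k \<in> K}"

definition diag_conj_classM :: "('a \<Rightarrow> 'a) set \<Rightarrow> nat \<Rightarrow> (nat \<Rightarrow> 'a \<Rightarrow> 'a)
    \<Rightarrow> (nat \<Rightarrow> 'a \<Rightarrow> 'a) set" where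
  "diag_conj_classM K n gs = {(\<lambda>i\<in>{..<n}. k \<circ> gs i \<circ> inv k) | k. k \<in> K}"

definition ample_generics_AutN :: "'a set \<Rightarrow> ('a \<Rightarrow> 'a) set \<Rightarrow> ('a \<Rightarrow> 'a) topology \<Rightarrow> bool" where
  "ample_generics_AutN N K T \<longleftrightarrow>
     (\<forall>n. \<exists>gs \<in> PiE {..<n} (\<lambda>_. K). comeagre_in (power_top T n) (diag_conj_classN K N n gs))"

definition topometric_ample_generics_AutM ::
  "('a \<Rightarrow> 'a \<Rightarrow> real) \<Rightarrow> ('a \<Rightarrow> 'a) set \<Rightarrow> ('a \<Rightarrow> 'a) topology \<Rightarrow> bool" where
  "topometric_ample_generics_AutM d G T \<longleftrightarrow>
     (\<forall>n. \<forall>\<epsilon>>0. \<exists>gs \<in> PiE {..<n} (\<lambda>_. G).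
        comeagre_in (power_top T n) (tuple_nbhd d G n (diag_conj_classM G n gs) \<epsilon>))"

end

theory Submission
  imports Defs
begin



definition disjfam :: "('n \<times> 'b set) set \<Rightarrow> bool" where
  "disjfam Pf \<longleftrightarrow> (\<forall>p\<in>Pf. \<forall>q\<in>Pf. p \<noteq> q \<longrightarrow> snd p \<inter> snd q = {})"

lemma maximal_disjoint_family:
  "\<exists>Pf \<subseteq> Cand. disjfam Pf \<and> (\<forall>p\<in>Cand. (\<forall>q\<in>Pf. snd p \<inter> snd q = {}) \<longrightarrow> p \<in> Pf)"
proof -
  let ?A = "{Pf. Pf \<subseteq> Cand \<and> disjfam Pf}"
  have "\<forall>C\<in>chains ?A. \<Union>C \<in> ?A"
  proof
    fix C assume C: "C \<in> chains ?A"
    have "\<Union>C \<subseteq> Cand" using chainsD2[OF C] by auto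
    moreover have "disjfam (\<Union>C)"
      unfolding disjfam_def
    proof (intro ballI impI)
      fix p q assume "p \<in> \<Union>C" "q \<in> \<Union>C" "p \<noteq> q"
      then obtain X Y where XY: "X \<in> C" "Y \<in> C" "p \<in> X" "q \<in> Y" by auto
      then have "X \<subseteq> Y \<or> Y \<subseteq> X" using chainsD[OF C] by blast
      then show "snd p \<inter> snd q = {}"
        using XY chainsD2[OF C] \<open>p \<noteq> q\<close> unfolding disjfam_def by blast
    qed
    ultimately show "\<Union>C \<in> ?A" by simp
  qed
  from Zorn_Lemma[OF this] obtain M where M: "M \<in> ?A" "\<forall>X\<in>?A. M \<subseteq> X \<longrightarrow> X = M" by blast
  have "\<forall>p\<in>Cand. (\<forall>q\<in>M. snd p \<inter> snd q = {}) \<longrightarrow> p \<in> M"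
  proof (intro ballI impI)
    fix p assume p: "p \<in> Cand" "\<forall>q\<in>M. snd p \<inter> snd q = {}"
    have "insert p M \<in> ?A" using M(1) p unfolding disjfam_def by (auto simp: Int_commute)
    then have "insert p M = M" using M(2) by blast
    then show "p \<in> M" by blast
  qed
  then show ?thesis using M(1) by blast
qed

lemma nowhere_dense_compl:
  assumes "openin X W" "\<And>V. openin X V \<Longrightarrow> V \<noteq> {} \<Longrightarrow> V \<inter> W \<noteq> {}"
  shows "nowhere_dense_in X (topspace X - W)"
proof -
  have "X closure_of (topspace X - W) = topspace X - W"
    using assms(1) by (simp add: closure_of_closedin closedin_diff)
  moreover have "X interior_of (topspace X - W) = {}"
    unfolding interior_of_eq_empty using assms(2) by blast
  ultimately show ?thesis unfolding nowhere_dense_in_def by auto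
qed

lemma comeagre_of_dense_opens:
  fixes W :: "'c \<Rightarrow> 'b set"
  assumes "countable I" "\<And>m. m \<in> I \<Longrightarrow> openin X (W m)"
    "\<And>m V. m \<in> I \<Longrightarrow> openin X V \<Longrightarrow> V \<noteq> {} \<Longrightarrow> V \<inter> W m \<noteq> {}"
    "topspace X \<inter> (\<Inter>m\<in>I. W m) \<subseteq> S" "S \<subseteq> topspace X"
  shows "comeagre_in X S"
proof -
  have "meagre_in X (topspace X - S)"
    unfolding meagre_in_def
  proof (intro exI conjI)
    show "countable ((\<lambda>m. topspace X - W m) ` I)" using assms(1) by simp
    show "\<forall>T\<in>(\<lambda>m. topspace X - W m) ` I. nowhere_dense_in X T"
    proof
      fix T assume "T \<in> (\<lambda>m. topspace X - W m) ` I"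
      then obtain m where "m \<in> I" "T = topspace X - W m" by blast
      then show "nowhere_dense_in X T" using nowhere_dense_compl[of X "W m"] assms(2,3) by simp
    qed
    show "topspace X - S \<subseteq> \<Union> ((\<lambda>m. topspace X - W m) ` I)" using assms(4) by blast
  qed
  then show ?thesis using assms(5) unfolding comeagre_in_def by simp
qed

lemma comeagre_mono:
  "comeagre_in X S \<Longrightarrow> S \<subseteq> S' \<Longrightarrow> S' \<subseteq> topspace X \<Longrightarrow> comeagre_in X S'"
  unfolding comeagre_in_def meagre_in_def by (meson Diff_mono order_refl order_trans)

lemma meagre_dense_opens:
  assumes "comeagre_in X A"
  shows "\<exists>Op::nat \<Rightarrow> 'b set. (\<forall>m. openin X (Op m)) \<and> (\<forall>m V. openin X V \<longrightarrow> V \<noteq> {} \<longrightarrow> V \<inter> Op m \<noteq> {})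
          \<and> topspace X \<inter> (\<Inter>m. Op m) \<subseteq> A"
proof -
  obtain Fm where Fm: "countable Fm" "\<forall>T\<in>Fm. nowhere_dense_in X T" "topspace X - A \<subseteq> \<Union>Fm"
    using assms unfolding comeagre_in_def meagre_in_def by blast
  obtain T :: "nat \<Rightarrow> 'b set" where T: "Fm \<subseteq> range T" "\<And>m. nowhere_dense_in X (T m)"
  proof (cases "Fm = {}")
    case True then show ?thesis using that[of "\<lambda>_. {}"] by (simp add: nowhere_dense_in_def)
  next
    case False then show ?thesis using that[of "from_nat_into Fm"] Fm
      by (simp add: range_from_nat_into from_nat_into)
  qed
  define Op where "Op m = topspace X - X closure_of (T m)" for m
  have "openin X (Op m)" for m unfolding Op_def by (simp add: openin_diff)
  moreover have "V \<inter> Op m \<noteq> {}" if "openin X V" "V \<noteq> {}" for m V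
  proof
    assume "V \<inter> Op m = {}"
    then have "V \<subseteq> X closure_of (T m)" using openin_subset[OF that(1)] unfolding Op_def by blast
    then have "V \<subseteq> X interior_of (X closure_of (T m))" using that(1) by (simp add: interior_of_maximal)
    then show False using T(2)[of m] that(2) unfolding nowhere_dense_in_def by blast
  qed
  moreover have "topspace X \<inter> (\<Inter>m. Op m) \<subseteq> A"
  proof
    fix x assume x: "x \<in> topspace X \<inter> (\<Inter>m. Op m)"
    show "x \<in> A"
    proof (rule ccontr)
      assume "x \<notin> A"
      then obtain m where "x \<in> T m" using x Fm(3) T(1) by blast
      then have "x \<in> X closure_of (T m)" using x closure_of_subset_Int by fastforce
      then show False using x unfolding Op_def by blast
    qed
  qed
  ultimately show ?thesis by blast
qed




lemma tree_dense_opens: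
  fixes Q :: "'n \<Rightarrow> 'b set"
  assumes Qopen: "\<And>s. openin X (Q s)"
    and root: "Q r = topspace X" "ok r"
    and dens: "\<And>s V. ok s \<Longrightarrow> openin X V \<Longrightarrow> V \<noteq> {} \<Longrightarrow> V \<subseteq> Q s \<Longrightarrow> \<exists>t. ch s t \<and> ok t \<and> V \<inter> Q t \<noteq> {}"
  shows "\<exists>W::nat \<Rightarrow> 'b set. (\<forall>m. openin X (W m)) \<and> (\<forall>m V. openin X V \<longrightarrow> V \<noteq> {} \<longrightarrow> V \<inter> W m \<noteq> {}) \<and>
     (\<forall>g \<in> topspace X \<inter> (\<Inter>m. W m). \<exists>\<sigma>. \<sigma> 0 = r \<and> (\<forall>m. ch (\<sigma> m) (\<sigma> (Suc m)) \<and> g \<in> Q (\<sigma> m)))"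
proof -
  define Cand where "Cand s Z = {(t, Z'). ch s t \<and> ok t \<and> openin X Z' \<and> Z' \<noteq> {} \<and> Z' \<subseteq> Z \<inter> Q t}" for s Z
  define step where "step s Z = (SOME Pf. Pf \<subseteq> Cand s Z \<and> disjfam Pf \<and> (\<forall>p\<in>Cand s Z. (\<forall>q\<in>Pf. snd p \<inter> snd q = {}) \<longrightarrow> p \<in> Pf))" for s Z
  have step: "step s Z \<subseteq> Cand s Z \<and> disjfam (step s Z) \<and> (\<forall>p\<in>Cand s Z. (\<forall>q\<in>step s Z. snd p \<inter> snd q = {}) \<longrightarrow> p \<in> step s Z)" for s Z
    unfolding step_def using someI_ex[OF maximal_disjoint_family[of "Cand s Z"]] by blast
  define lev where "lev = rec_nat {(r, topspace X)} (\<lambda>m L. \<Union>(s,Z)\<in>L. step s Z)"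
  have lev0: "lev 0 = {(r, topspace X)}" and levS: "lev (Suc m) = (\<Union>(s,Z)\<in>lev m. step s Z)" for m
    by (simp_all add: lev_def)
  have inv: "(\<forall>(s,Z)\<in>lev m. ok s \<and> openin X Z \<and> Z \<subseteq> Q s) \<and> disjfam (lev m) \<and> (\<forall>V. openin X V \<longrightarrow> V \<noteq> {} \<longrightarrow> (\<exists>(s,Z)\<in>lev m. V \<inter> Z \<noteq> {}))" for m
  proof (induction m)
    case 0
    have "V \<inter> topspace X \<noteq> {}" if "openin X V" "V \<noteq> {}" for V
      using openin_subset[OF that(1)] that(2) by blast
    then show ?case using root by (auto simp: lev0 disjfam_def)
  next
    case (Suc m)
    have IH1: "\<forall>(s,Z)\<in>lev m. ok s \<and> openin X Z \<and> Z \<subseteq> Q s" and IH2: "disjfam (lev m)"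
      and IH3: "\<forall>V. openin X V \<longrightarrow> V \<noteq> {} \<longrightarrow> (\<exists>(s,Z)\<in>lev m. V \<inter> Z \<noteq> {})" using Suc by auto
    show ?case
    proof (intro conjI)
      show "\<forall>(t,Z')\<in>lev (Suc m). ok t \<and> openin X Z' \<and> Z' \<subseteq> Q t"
      proof (clarify)
        fix t Z' assume "(t,Z') \<in> lev (Suc m)"
        then obtain s Z where "(s,Z)\<in>lev m" "(t,Z') \<in> step s Z" by (auto simp: levS)
        then have "(t,Z') \<in> Cand s Z" using step[of s Z] by blast
        then show "ok t \<and> openin X Z' \<and> Z' \<subseteq> Q t" by (simp add: Cand_def)
      qed
      show "disjfam (lev (Suc m))"
        unfolding disjfam_def
      proof (intro ballI impI)
        fix p q assume p: "p \<in> lev (Suc m)" and q: "q \<in> lev (Suc m)" and pq: "p \<noteq> q"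
        from p obtain s Z where sZ: "(s,Z) \<in> lev m" "p \<in> step s Z" by (auto simp: levS)
        from q obtain s' Z' where s'Z': "(s',Z') \<in> lev m" "q \<in> step s' Z'" by (auto simp: levS)
        show "snd p \<inter> snd q = {}"
        proof (cases "(s,Z) = (s',Z')")
          case True then show ?thesis using step[of s Z] sZ s'Z' pq unfolding disjfam_def by auto
        next
          case False
          then have "Z \<inter> Z' = {}" using IH2 sZ s'Z' unfolding disjfam_def by fastforce
          moreover have "snd p \<subseteq> Z"
          proof -
            have "p \<in> Cand s Z" using step[of s Z] sZ(2) by blast
            then show ?thesis by (cases p) (auto simp: Cand_def)
          qed
          moreover have "snd q \<subseteq> Z'"
          proof -
            have "q \<in> Cand s' Z'" using step[of s' Z'] s'Z'(2) by blast
            then show ?thesis by (cases q) (auto simp: Cand_def)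
          qed
          ultimately show ?thesis by blast
        qed
      qed
      show "\<forall>V. openin X V \<longrightarrow> V \<noteq> {} \<longrightarrow> (\<exists>(s,Z)\<in>lev (Suc m). V \<inter> Z \<noteq> {})"
      proof (intro allI impI)
        fix V assume V: "openin X V" "V \<noteq> {}"
        then obtain s Z where sZ: "(s,Z)\<in>lev m" "V \<inter> Z \<noteq> {}" using IH3 by blast
        have Z: "ok s" "openin X Z" "Z \<subseteq> Q s" using IH1 sZ(1) by auto
        have "\<exists>q\<in>step s Z. (V \<inter> Z) \<inter> snd q \<noteq> {}"
        proof (rule ccontr)
          assume none: "\<not> (\<exists>q\<in>step s Z. (V \<inter> Z) \<inter> snd q \<noteq> {})"
          have VZ: "openin X (V \<inter> Z)" using V(1) Z(2) by (rule openin_Int)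
          obtain t where t: "ch s t" "ok t" "(V \<inter> Z) \<inter> Q t \<noteq> {}"
            using dens[OF Z(1) VZ sZ(2)] Z(3) by blast
          have "(t, V \<inter> Z \<inter> Q t) \<in> Cand s Z" unfolding Cand_def using t VZ Qopen[of t]
            by (auto intro!: openin_Int)
          moreover have "\<forall>q\<in>step s Z. snd (t, V \<inter> Z \<inter> Q t) \<inter> snd q = {}" using none by auto
          moreover have "\<forall>p\<in>Cand s Z. (\<forall>q\<in>step s Z. snd p \<inter> snd q = {}) \<longrightarrow> p \<in> step s Z"
            using step[of s Z] by simp
          ultimately have mem: "(t, V \<inter> Z \<inter> Q t) \<in> step s Z" by blast
          have none': "\<forall>q\<in>step s Z. V \<inter> Z \<inter> snd q = {}" using none by auto
          have "V \<inter> Z \<inter> snd (t, V \<inter> Z \<inter> Q t) = {}" using bspec[OF none' mem] .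
          then show False using t(3) by auto
        qed
        then obtain q where q: "q \<in> step s Z" "V \<inter> Z \<inter> snd q \<noteq> {}" by blast
        have "q \<in> lev (Suc m)" using q(1) sZ(1) by (auto simp: levS)
        then show "\<exists>(s,Z)\<in>lev (Suc m). V \<inter> Z \<noteq> {}" using q(2) by (cases q) auto
      qed
    qed
  qed
  have parent: "\<forall>(t,Z')\<in>lev (Suc m). \<exists>(s,Z)\<in>lev m. ch s t \<and> Z' \<subseteq> Z" for m
  proof (clarify)
    fix t Z' assume "(t,Z') \<in> lev (Suc m)"
    then obtain s Z where sZ: "(s,Z)\<in>lev m" "(t,Z') \<in> step s Z" by (auto simp: levS)
    then have "(t,Z') \<in> Cand s Z" using step[of s Z] by blast
    then have "ch s t \<and> Z' \<subseteq> Z" by (simp add: Cand_def)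
    then show "\<exists>(s,Z)\<in>lev m. ch s t \<and> Z' \<subseteq> Z" using sZ(1) by blast
  qed
  define W where "W m = \<Union>(snd ` lev m)" for m
  show ?thesis
  proof (rule exI[of _ W], intro conjI allI impI ballI)
    fix m show "openin X (W m)" using inv[of m] unfolding W_def by (auto intro!: openin_Union)
  next
    fix m V assume V: "openin X V" "V \<noteq> {}"
    obtain s Z where sZ: "(s,Z)\<in>lev m" "V \<inter> Z \<noteq> {}" using inv[of m] V by blast
    have "Z \<subseteq> W m" unfolding W_def using sZ(1) by force
    then show "V \<inter> W m \<noteq> {}" using sZ(2) by blast
  next
    fix g assume g: "g \<in> topspace X \<inter> (\<Inter>m. W m)"
    have ex: "\<exists>p. p \<in> lev m \<and> g \<in> snd p" for m using g unfolding W_def by blast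
    define pp where "pp m = (SOME p. p \<in> lev m \<and> g \<in> snd p)" for m
    have pp: "pp m \<in> lev m \<and> g \<in> snd (pp m)" for m unfolding pp_def using someI_ex[OF ex] .
    have uniq: "p = pp m" if "p \<in> lev m" "g \<in> snd p" for p m
    proof (rule ccontr)
      assume "p \<noteq> pp m"
      then have "snd p \<inter> snd (pp m) = {}" using inv[of m] pp[of m] that unfolding disjfam_def by blast
      then show False using that pp[of m] by blast
    qed
    show "\<exists>\<sigma>. \<sigma> 0 = r \<and> (\<forall>m. ch (\<sigma> m) (\<sigma> (Suc m)) \<and> g \<in> Q (\<sigma> m))"
    proof (rule exI[of _ "\<lambda>m. fst (pp m)"], intro conjI allI)
      show "fst (pp 0) = r" using pp[of 0] by (auto simp: lev0)
      fix m
      obtain t Z' where tZ: "pp (Suc m) = (t,Z')" by (cases "pp (Suc m)")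
      have "(t,Z') \<in> lev (Suc m)" using pp[of "Suc m"] tZ by simp
      then have "\<exists>(s,Z)\<in>lev m. ch s t \<and> Z' \<subseteq> Z" using parent[of m] by blast
      then obtain s Z where sZ: "(s,Z)\<in>lev m" "ch s t" "Z' \<subseteq> Z" by blast
      have "(s,Z) = pp m" using uniq[of "(s,Z)" m] sZ pp[of "Suc m"] tZ by auto
      then show "ch (fst (pp m)) (fst (pp (Suc m)))" using tZ sZ by (metis fst_conv)
      obtain s0 Z0 where s0: "pp m = (s0, Z0)" by (cases "pp m")
      then show "g \<in> Q (fst (pp m))" using pp[of m] inv[of m] by fastforce
    qed
  qed
qed




locale setting =
  fixes d :: "'a \<Rightarrow> 'a \<Rightarrow> real"
    and arP :: "'i \<Rightarrow> nat" and P :: "'i \<Rightarrow> 'a list \<Rightarrow> real"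
    and arF :: "'j \<Rightarrow> nat" and f :: "'j \<Rightarrow> 'a list \<Rightarrow> 'a"
    and N :: "'a set"
    and arR :: "'r \<Rightarrow> nat" and R :: "'r \<Rightarrow> 'a list \<Rightarrow> bool"
    and arG :: "'k \<Rightarrow> nat" and F :: "'k \<Rightarrow> 'a list \<Rightarrow> 'a"
  assumes polish: "polish_metric_structure d arP P arF f"
    and good: "good_approx_substructure d arP P arF f N arR R arG F"
begin

abbreviation "G \<equiv> AutM d arP P arF f"
abbreviation "H \<equiv> AutN N arR R arG F"
abbreviation "TG \<equiv> tauM d arP P arF f"
abbreviation "TH \<equiv> tauN N arR R arG F"
abbreviation "ex \<equiv> ext_aut G N"

lemma ms: "Metric_space UNIV d"
  using polish unfolding polish_metric_structure_def metric_structure_def by blast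

interpretation M: Metric_space UNIV d by (rule ms)

lemma dbound: "\<exists>B. \<forall>x y. d x y \<le> B"
  using polish unfolding polish_metric_structure_def metric_structure_def by blast

lemma cas: "countable_approx_substructure d arP P arF f N arR R arG F"
  using good unfolding good_approx_substructure_def by blast

lemma goodopen: "openin TH U \<Longrightarrow> \<epsilon> > 0 \<Longrightarrow>
    openin TG {y \<in> G. \<exists>u\<in>ex ` U. unif_dist d y u < \<epsilon>}"
  using good unfolding good_approx_substructure_def by blast

lemma classical: "classical_structure N arR R arG F"
  using cas unfolding countable_approx_substructure_def by blast

lemma countN: "countable N"
  using cas unfolding countable_approx_substructure_def by blast

lemma denseN: "\<epsilon> > 0 \<Longrightarrow> \<exists>y\<in>N. d x y < \<epsilon>"
  using cas unfolding countable_approx_substructure_def by blast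

lemma ex_unique: "h \<in> H \<Longrightarrow> \<exists>!g. g \<in> G \<and> (\<forall>x\<in>N. g x = h x)"
  using cas unfolding countable_approx_substructure_def by blast

lemma closure_ext: "TG closure_of (ex ` H) = G"
  using cas unfolding countable_approx_substructure_def by blast

lemma ex_in: "h \<in> H \<Longrightarrow> ex h \<in> G" and ex_agree: "h \<in> H \<Longrightarrow> x \<in> N \<Longrightarrow> ex h x = h x"
proof -
  assume h: "h \<in> H"
  have "ex h \<in> G \<and> (\<forall>x\<in>N. ex h x = h x)" unfolding ext_aut_def by (rule theI'[OF ex_unique[OF h]])
  then show "ex h \<in> G" by blast
next
  assume h: "h \<in> H" and x: "x \<in> N"
  have "ex h \<in> G \<and> (\<forall>x\<in>N. ex h x = h x)" unfolding ext_aut_def by (rule theI'[OF ex_unique[OF h]])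
  then show "ex h x = h x" using x by blast
qed

lemma ex_eq: "h \<in> H \<Longrightarrow> g \<in> G \<Longrightarrow> (\<And>x. x \<in> N \<Longrightarrow> g x = h x) \<Longrightarrow> ex h = g"
  unfolding ext_aut_def by (rule the1_equality[OF ex_unique]) auto

lemma G_bij: "g \<in> G \<Longrightarrow> bij g" and G_iso: "g \<in> G \<Longrightarrow> d (g x) (g y) = d x y"
  by (auto simp: AutM_def)

lemma G_comp: assumes "g \<in> G" "h \<in> G" shows "g \<circ> h \<in> G"
proof -
  have "bij (g \<circ> h)" using assms by (auto simp: AutM_def intro: bij_comp)
  moreover have "P i (map (g \<circ> h) xs) = P i xs" if "length xs = arP i" for i xs
    using assms that by (simp add: AutM_def flip: map_map)
  moreover have "(g \<circ> h) (f j xs) = f j (map (g \<circ> h) xs)" if "length xs = arF j" for j xs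
    using assms that by (simp add: AutM_def flip: map_map)
  ultimately show ?thesis using assms by (auto simp: AutM_def)
qed

lemma G_inv: assumes "g \<in> G" shows "inv g \<in> G"
proof -
  have b: "bij g" using assms by (simp add: AutM_def)
  have gi: "g (inv g x) = x" for x using b by (simp add: bij_is_surj surj_f_inv_f)
  have "bij (inv g)" using b by (simp add: bij_imp_bij_inv)
  moreover have "d (inv g x) (inv g y) = d x y" for x y
    using G_iso[OF assms, of "inv g x" "inv g y"] by (simp add: gi)
  moreover have "P i (map (inv g) xs) = P i xs" if "length xs = arP i" for i xs
  proof -
    have hP: "\<forall>i xs. length xs = arP i \<longrightarrow> P i (map g xs) = P i xs" using assms by (simp add: AutM_def)
    have "map g (map (inv g) xs) = xs" by (simp add: gi map_idI)
    then show ?thesis using hP[rule_format, of "map (inv g) xs" i] that by simp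
  qed
  moreover have "inv g (f j xs) = f j (map (inv g) xs)" if "length xs = arF j" for j xs
  proof -
    have hF: "\<forall>j xs. length xs = arF j \<longrightarrow> g (f j xs) = f j (map g xs)" using assms by (simp add: AutM_def)
    have mm: "map g (map (inv g) xs) = xs" by (simp add: gi map_idI)
    have "g (f j (map (inv g) xs)) = f j (map g (map (inv g) xs))" using hF[rule_format, of "map (inv g) xs" j] that by simp
    also have "\<dots> = f j xs" by (simp only: mm)
    finally have "g (f j (map (inv g) xs)) = f j xs" .
    then show ?thesis using bij_inv_eq_iff[OF b, of "f j (map (inv g) xs)" "f j xs"] by simp
  qed
  ultimately show ?thesis by (auto simp: AutM_def)
qed

lemma H_ext: "h \<in> H \<Longrightarrow> h \<in> extensional N" and H_bij: "h \<in> H \<Longrightarrow> bij_betw h N N"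
  by (auto simp: AutN_def)

lemma H_maps: "h \<in> H \<Longrightarrow> x \<in> N \<Longrightarrow> h x \<in> N"
  by (rule bij_betw_apply[OF H_bij])

lemma topG: "topspace TG = G"
  by (simp add: tauM_def)

lemma topH: "topspace TH = H"
proof -
  have "H \<subseteq> (\<Pi>\<^sub>E x\<in>N. N)" using H_ext H_maps by (auto simp: PiE_def Pi_def)
  then show ?thesis by (auto simp: tauN_def)
qed

lemma top_pow: "topspace (power_top X n) = PiE {..<n} (\<lambda>_. topspace X)"
  by (simp add: power_top_def)

lemma ud_bdd: "bdd_above (range (\<lambda>x. d (g x) (h x)))"
proof -
  obtain B where "\<forall>x y. d x y \<le> B" using dbound by blast
  then show ?thesis by (intro bdd_aboveI[of _ B]) auto
qed

lemma ud_ge: "d (g x) (h x) \<le> unif_dist d g h"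
  unfolding unif_dist_def by (rule cSUP_upper[OF _ ud_bdd]) simp

lemma ud_le: "(\<And>x. d (g x) (h x) \<le> c) \<Longrightarrow> unif_dist d g h \<le> c"
  unfolding unif_dist_def by (rule cSUP_least) auto

lemma td_lt: assumes "\<epsilon> > 0"
  shows "tuple_dist d n gs hs < \<epsilon> \<longleftrightarrow> (\<forall>i<n. unif_dist d (gs i) (hs i) < \<epsilon>)"
proof -
  have fin: "finite (insert 0 ((\<lambda>i. unif_dist d (gs i) (hs i)) ` {..<n}))" by simp
  have "tuple_dist d n gs hs = Max (insert 0 ((\<lambda>i. unif_dist d (gs i) (hs i)) ` {..<n}))"
    unfolding tuple_dist_def using fin by (simp add: cSup_eq_Max)
  then show ?thesis using assms fin by (auto simp: Max_less_iff)
qed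

lemma td_le: assumes "c \<ge> 0" "\<And>i. i < n \<Longrightarrow> unif_dist d (gs i) (hs i) \<le> c"
  shows "tuple_dist d n gs hs \<le> c"
  unfolding tuple_dist_def using assms by (intro cSup_least) auto

end




context setting begin

interpretation M: Metric_space UNIV d by (rule ms)

definition box :: "nat \<Rightarrow> 'a set \<Rightarrow> (nat \<Rightarrow> 'a \<Rightarrow> 'a) \<Rightarrow> (nat \<Rightarrow> 'a \<Rightarrow> 'a) set" where
  "box n Fs \<sigma> = {v \<in> PiE {..<n} (\<lambda>_. H). \<forall>i<n. \<forall>x\<in>Fs. v i x = \<sigma> i x}"

definition Ext :: "nat \<Rightarrow> (nat \<Rightarrow> 'a \<Rightarrow> 'a) \<Rightarrow> (nat \<Rightarrow> 'a \<Rightarrow> 'a)" where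
  "Ext n c = (\<lambda>i\<in>{..<n}. ex (c i))"

definition nb :: "nat \<Rightarrow> (nat \<Rightarrow> 'a \<Rightarrow> 'a) set \<Rightarrow> real \<Rightarrow> (nat \<Rightarrow> 'a \<Rightarrow> 'a) set" where
  "nb n B \<epsilon> = {g \<in> PiE {..<n} (\<lambda>_. G). \<exists>c\<in>B. tuple_dist d n g (Ext n c) < \<epsilon>}"

definition trans :: "nat \<Rightarrow> (nat \<Rightarrow> 'a \<Rightarrow> 'a) \<Rightarrow> (nat \<Rightarrow> 'a \<Rightarrow> 'a) \<Rightarrow> (nat \<Rightarrow> 'a \<Rightarrow> 'a) \<Rightarrow> (nat \<Rightarrow> 'a \<Rightarrow> 'a)" where
  "trans n g u v = (\<lambda>i\<in>{..<n}. g i \<circ> inv (ex (u i)) \<circ> ex (v i))"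

lemma comp_open:
  assumes "finite Fs" "Fs \<subseteq> N"
  shows "openin TH {h \<in> H. \<forall>x\<in>Fs. h x = s x}"
proof -
  define S where "S x = (if x \<in> Fs then {s x} \<inter> N else N)" for x
  have mem: "h \<in> PiE N S \<longleftrightarrow> (\<forall>x\<in>Fs. h x = s x)" if h: "h \<in> H" for h
  proof
    assume hS: "h \<in> PiE N S"
    show "\<forall>x\<in>Fs. h x = s x"
    proof
      fix x assume x: "x \<in> Fs"
      then have "x \<in> N" using assms(2) by blast
      then have "h x \<in> S x" using hS by (auto simp: PiE_iff)
      then show "h x = s x" using x by (simp add: S_def)
    qed
  next
    assume a: "\<forall>x\<in>Fs. h x = s x"
    show "h \<in> PiE N S"
    proof (rule PiE_I)
      fix x assume x: "x \<in> N"
      then show "h x \<in> S x" using a H_maps[OF h x] by (auto simp: S_def)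
    next
      fix x assume "x \<notin> N" then show "h x = undefined" using H_ext[OF h] by (simp add: extensional_def)
    qed
  qed
  have eq: "{h \<in> H. \<forall>x\<in>Fs. h x = s x} = PiE N S \<inter> H" using mem by blast
  have fin: "finite {x \<in> N. S x \<noteq> topspace (discrete_topology N)}"
    by (rule finite_subset[OF _ assms(1)]) (auto simp: S_def)
  have "openin (product_topology (\<lambda>_. discrete_topology N) N) (PiE N S)"
    unfolding openin_PiE_gen using fin by (auto simp: S_def)
  then show ?thesis unfolding tauN_def eq openin_subtopology by blast
qed

lemma box_eq: "box n Fs \<sigma> = PiE {..<n} (\<lambda>i. {h \<in> H. \<forall>x\<in>Fs. h x = \<sigma> i x})"
  by (auto simp: box_def PiE_iff extensional_def)

lemma box_open: "finite Fs \<Longrightarrow> Fs \<subseteq> N \<Longrightarrow> openin (power_top TH n) (box n Fs \<sigma>)"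
  unfolding box_eq power_top_def by (subst openin_PiE) (auto intro: comp_open)

lemma box_sub_top: "box n Fs \<sigma> \<subseteq> PiE {..<n} (\<lambda>_. H)"
  by (auto simp: box_def)

lemma box_nbhd:
  assumes "openin (power_top TH n) Op" "u \<in> Op"
  shows "\<exists>Fs. finite Fs \<and> Fs \<subseteq> N \<and> box n Fs u \<subseteq> Op"
proof -
  have "\<forall>x\<in>Op. \<exists>U. finite {i \<in> {..<n}. U i \<noteq> topspace TH} \<and> (\<forall>i\<in>{..<n}. openin TH (U i)) \<and> x \<in> PiE {..<n} U \<and> PiE {..<n} U \<subseteq> Op"
    using assms(1) unfolding power_top_def openin_product_topology_alt by simp
  then obtain U where U: "\<forall>i\<in>{..<n}. openin TH (U i)" "u \<in> PiE {..<n} U" "PiE {..<n} U \<subseteq> Op"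
    using assms(2) by blast
  have "\<exists>T. openin (product_topology (\<lambda>_. discrete_topology N) N) T \<and> U i = T \<inter> H" if "i<n" for i
    using U(1) that unfolding tauN_def openin_subtopology by auto
  then obtain T where T: "\<And>i. i<n \<Longrightarrow> openin (product_topology (\<lambda>_. discrete_topology N) N) (T i) \<and> U i = T i \<inter> H"
    by metis
  have "\<exists>W. finite {x\<in>N. W x \<noteq> N} \<and> u i \<in> PiE N W \<and> PiE N W \<subseteq> T i" if i: "i<n" for i
  proof -
    have ui: "u i \<in> T i" using U(2) T[OF i] i by auto
    have "\<forall>y\<in>T i. \<exists>W. finite {x\<in>N. W x \<noteq> topspace (discrete_topology N)} \<and> (\<forall>x\<in>N. openin (discrete_topology N) (W x)) \<and> y \<in> PiE N W \<and> PiE N W \<subseteq> T i"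
      using T[OF i] unfolding openin_product_topology_alt by simp
    then obtain W where "finite {x\<in>N. W x \<noteq> topspace (discrete_topology N)}" "u i \<in> PiE N W" "PiE N W \<subseteq> T i"
      using ui by blast
    then show ?thesis by auto
  qed
  then obtain W where W: "\<And>i. i<n \<Longrightarrow> finite {x\<in>N. W i x \<noteq> N} \<and> u i \<in> PiE N (W i) \<and> PiE N (W i) \<subseteq> T i"
    by metis
  define Fs where "Fs = (\<Union>i<n. {x\<in>N. W i x \<noteq> N})"
  have "finite Fs" "Fs \<subseteq> N" using W by (auto simp: Fs_def)
  moreover have "box n Fs u \<subseteq> Op"
  proof
    fix v assume v: "v \<in> box n Fs u"
    have "v \<in> PiE {..<n} U"
    proof (rule PiE_I)
      fix i assume i: "i \<in> {..<n}"
      have vi: "v i \<in> H" using v i by (auto simp: box_def)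
      have "v i \<in> PiE N (W i)"
      proof (rule PiE_I)
        fix x assume x: "x \<in> N"
        show "v i x \<in> W i x"
        proof (cases "W i x = N")
          case True then show ?thesis using H_maps[OF vi x] by simp
        next
          case False then have "x \<in> Fs" using i x by (auto simp: Fs_def)
          then have "v i x = u i x" using v i by (auto simp: box_def)
          then show ?thesis using W[of i] i x by (auto simp: PiE_iff)
        qed
      next
        fix x assume "x \<notin> N" then show "v i x = undefined" using H_ext[OF vi] by (simp add: extensional_def)
      qed
      then show "v i \<in> U i" using W[of i] T[of i] vi i by auto
    next
      fix i assume "i \<notin> {..<n}" then show "v i = undefined" using v by (auto simp: box_def PiE_def extensional_def)
    qed
    then show "v \<in> Op" using U(3) by blast
  qed
  ultimately show ?thesis by blast
qed

lemma nb_box_eq: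
  assumes "\<epsilon> > 0"
  shows "nb n (box n Fs \<sigma>) \<epsilon> = PiE {..<n} (\<lambda>i. {y \<in> G. \<exists>u\<in>ex ` {h \<in> H. \<forall>x\<in>Fs. h x = \<sigma> i x}. unif_dist d y u < \<epsilon>})"
proof (intro set_eqI iffI)
  fix g assume "g \<in> nb n (box n Fs \<sigma>) \<epsilon>"
  then obtain c where g: "g \<in> PiE {..<n} (\<lambda>_. G)" and c: "c \<in> box n Fs \<sigma>" "tuple_dist d n g (Ext n c) < \<epsilon>"
    unfolding nb_def by blast
  have "\<forall>i<n. unif_dist d (g i) (ex (c i)) < \<epsilon>" using c(2) assms by (simp add: td_lt Ext_def)
  then show "g \<in> PiE {..<n} (\<lambda>i. {y \<in> G. \<exists>u\<in>ex ` {h \<in> H. \<forall>x\<in>Fs. h x = \<sigma> i x}. unif_dist d y u < \<epsilon>})"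
    using g c(1) by (auto simp: PiE_iff box_def)
next
  fix g assume g: "g \<in> PiE {..<n} (\<lambda>i. {y \<in> G. \<exists>u\<in>ex ` {h \<in> H. \<forall>x\<in>Fs. h x = \<sigma> i x}. unif_dist d y u < \<epsilon>})"
  then have "\<forall>i\<in>{..<n}. \<exists>h. h \<in> H \<and> (\<forall>x\<in>Fs. h x = \<sigma> i x) \<and> unif_dist d (g i) (ex h) < \<epsilon>"
    by (auto simp: PiE_iff)
  then obtain c where c: "\<And>i. i \<in> {..<n} \<Longrightarrow> c i \<in> H \<and> (\<forall>x\<in>Fs. c i x = \<sigma> i x) \<and> unif_dist d (g i) (ex (c i)) < \<epsilon>"
    by metis
  have "restrict c {..<n} \<in> box n Fs \<sigma>" using c by (auto simp: box_def)
  moreover have "tuple_dist d n g (Ext n (restrict c {..<n})) < \<epsilon>" using c assms by (simp add: td_lt Ext_def)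
  moreover have "g \<in> PiE {..<n} (\<lambda>_. G)" using g by (auto simp: PiE_iff)
  ultimately show "g \<in> nb n (box n Fs \<sigma>) \<epsilon>" unfolding nb_def by blast
qed

lemma nb_box_open: assumes "finite Fs" "Fs \<subseteq> N" "\<epsilon> > 0"
  shows "openin (power_top TG n) (nb n (box n Fs \<sigma>) \<epsilon>)"
proof -
  have "\<forall>i\<in>{..<n}. openin TG {y \<in> G. \<exists>u\<in>ex ` {h \<in> H. \<forall>x\<in>Fs. h x = \<sigma> i x}. unif_dist d y u < \<epsilon>}"
    using goodopen[OF comp_open[OF assms(1,2)] assms(3)] by blast
  then show ?thesis unfolding power_top_def nb_box_eq[OF assms(3)] by (subst openin_PiE) auto
qed

lemma G_nbhd:
  assumes "openin (power_top TG n) V" "w \<in> V"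
  shows "\<exists>K \<delta>. finite K \<and> \<delta> > 0 \<and> (\<forall>w'\<in>PiE {..<n} (\<lambda>_. G). (\<forall>i<n. \<forall>x\<in>K. d (w' i x) (w i x) < \<delta>) \<longrightarrow> w' \<in> V)"
proof -
  have "\<forall>x\<in>V. \<exists>U. finite {i \<in> {..<n}. U i \<noteq> topspace TG} \<and> (\<forall>i\<in>{..<n}. openin TG (U i)) \<and> x \<in> PiE {..<n} U \<and> PiE {..<n} U \<subseteq> V"
    using assms(1) unfolding power_top_def openin_product_topology_alt by simp
  then obtain U where U: "\<forall>i\<in>{..<n}. openin TG (U i)" "w \<in> PiE {..<n} U" "PiE {..<n} U \<subseteq> V"
    using assms(2) by blast
  have "\<exists>T. openin (product_topology (\<lambda>_. M.mtopology) UNIV) T \<and> U i = T \<inter> G" if "i<n" for i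
    using U(1) that unfolding tauM_def openin_subtopology by auto
  then obtain T where T: "\<And>i. i<n \<Longrightarrow> openin (product_topology (\<lambda>_. M.mtopology) UNIV) (T i) \<and> U i = T i \<inter> G"
    by metis
  have "\<exists>W. finite {x. W x \<noteq> UNIV} \<and> (\<forall>x. openin M.mtopology (W x)) \<and> w i \<in> PiE UNIV W \<and> PiE UNIV W \<subseteq> T i" if i: "i<n" for i
  proof -
    have wi: "w i \<in> T i" using U(2) T[OF i] i by auto
    have "\<forall>y\<in>T i. \<exists>W. finite {x\<in>UNIV. W x \<noteq> topspace M.mtopology} \<and> (\<forall>x\<in>UNIV. openin M.mtopology (W x)) \<and> y \<in> PiE UNIV W \<and> PiE UNIV W \<subseteq> T i"
      using T[OF i] unfolding openin_product_topology_alt by simp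
    then obtain W where "finite {x\<in>UNIV. W x \<noteq> topspace M.mtopology}" "\<forall>x\<in>UNIV. openin M.mtopology (W x)" "w i \<in> PiE UNIV W" "PiE UNIV W \<subseteq> T i"
      using wi by blast
    then show ?thesis by auto
  qed
  then obtain W where W: "\<And>i. i<n \<Longrightarrow> finite {x. W i x \<noteq> UNIV} \<and> (\<forall>x. openin M.mtopology (W i x)) \<and> w i \<in> PiE UNIV (W i) \<and> PiE UNIV (W i) \<subseteq> T i"
    by metis
  have "\<exists>r>0. M.mball (w i x) r \<subseteq> W i x" if "i<n" for i x
  proof -
    have "w i x \<in> W i x" using W[OF that] by (auto simp: PiE_iff)
    then show ?thesis using W[OF that] unfolding M.openin_mtopology by blast
  qed
  then obtain r where r: "\<And>i x. i<n \<Longrightarrow> r i x > 0 \<and> M.mball (w i x) (r i x) \<subseteq> W i x" by metis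
  define S where "S = (SIGMA i:{..<n}. {x. W i x \<noteq> UNIV})"
  have finS: "finite S" unfolding S_def using W by auto
  define \<delta> where "\<delta> = Min (insert 1 ((\<lambda>(i,x). r i x) ` S))"
  have dpos: "\<delta> > 0" unfolding \<delta>_def using finS r by (auto simp: S_def)
  have dle: "\<delta> \<le> r i x" if "i<n" "W i x \<noteq> UNIV" for i x
    unfolding \<delta>_def using finS that by (intro Min_le) (auto simp: S_def)
  define K where "K = (\<Union>i<n. {x. W i x \<noteq> UNIV})"
  have "finite K" unfolding K_def using W by auto
  moreover have "w' \<in> V" if w': "w' \<in> PiE {..<n} (\<lambda>_. G)" "\<forall>i<n. \<forall>x\<in>K. d (w' i x) (w i x) < \<delta>" for w'
  proof -
    have "w' \<in> PiE {..<n} U"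
    proof (rule PiE_I)
      fix i assume i: "i \<in> {..<n}"
      have "w' i \<in> PiE UNIV (W i)"
      proof (rule PiE_I)
        fix x :: 'a
        show "w' i x \<in> W i x"
        proof (cases "W i x = UNIV")
          case False
          then have "x \<in> K" using i by (auto simp: K_def)
          then have "d (w i x) (w' i x) < r i x" using w'(2) i dle[of i x] False M.commute by fastforce
          then show ?thesis using r[of i x] i by auto
        qed simp
      qed simp
      then show "w' i \<in> U i" using W[of i] T[of i] w'(1) i by (auto simp: PiE_iff)
    next
      fix i assume "i \<notin> {..<n}" then show "w' i = undefined" using w'(1) by (auto simp: PiE_def extensional_def)
    qed
    then show ?thesis using U(3) by blast
  qed
  ultimately show ?thesis using dpos by blast
qed

end



context setting begin

interpretation M: Metric_space UNIV d by (rule ms)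

lemma cyl_open:
  assumes "finite K"
  shows "openin TG {h \<in> G. \<forall>x\<in>K. d (h x) (w0 x) < \<delta>}"
proof -
  define S where "S x = (if x \<in> K then M.mball (w0 x) \<delta> else UNIV)" for x
  have eq: "{h \<in> G. \<forall>x\<in>K. d (h x) (w0 x) < \<delta>} = PiE UNIV S \<inter> G"
  proof (intro set_eqI iffI)
    fix h assume "h \<in> {h \<in> G. \<forall>x\<in>K. d (h x) (w0 x) < \<delta>}"
    then show "h \<in> PiE UNIV S \<inter> G" by (auto simp: S_def PiE_iff M.commute)
  next
    fix h assume h: "h \<in> PiE UNIV S \<inter> G"
    have "d (h x) (w0 x) < \<delta>" if "x \<in> K" for x
    proof -
      have "h x \<in> S x" using h by (auto simp: PiE_iff)
      then show ?thesis using that by (simp add: S_def M.commute)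
    qed
    then show "h \<in> {h \<in> G. \<forall>x\<in>K. d (h x) (w0 x) < \<delta>}" using h by blast
  qed
  have "openin (product_topology (\<lambda>_. M.mtopology) UNIV) (PiE UNIV S)"
  proof -
    have "finite {i \<in> UNIV. S i \<noteq> topspace M.mtopology}"
      by (rule finite_subset[OF _ assms]) (auto simp: S_def)
    moreover have "\<forall>i\<in>UNIV. openin M.mtopology (S i)" by (auto simp: S_def)
    ultimately show ?thesis by (simp add: openin_PiE_gen)
  qed
  then show ?thesis unfolding tauM_def eq openin_subtopology by blast
qed

lemma Ext_in: "u \<in> PiE {..<n} (\<lambda>_. H) \<Longrightarrow> Ext n u \<in> PiE {..<n} (\<lambda>_. G)"
  by (auto simp: Ext_def PiE_iff ex_in)

lemma Ext_dense:
  assumes "openin (power_top TG n) V" "V \<noteq> {}"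
  shows "\<exists>u\<in>PiE {..<n} (\<lambda>_. H). Ext n u \<in> V"
proof -
  obtain w where w: "w \<in> V" using assms(2) by blast
  have wG: "w \<in> PiE {..<n} (\<lambda>_. G)"
    using openin_subset[OF assms(1)] w by (auto simp: top_pow topG)
  obtain K \<delta> where K: "finite K" "\<delta> > 0"
    and KV: "\<forall>w'\<in>PiE {..<n} (\<lambda>_. G). (\<forall>i<n. \<forall>x\<in>K. d (w' i x) (w i x) < \<delta>) \<longrightarrow> w' \<in> V"
    using G_nbhd[OF assms(1) w] by blast
  have "\<exists>h\<in>H. \<forall>x\<in>K. d (ex h x) (w i x) < \<delta>" if i: "i<n" for i
  proof -
    have "w i \<in> TG closure_of (ex ` H)" using wG i closure_ext by (auto simp: PiE_iff)
    moreover have "w i \<in> {h \<in> G. \<forall>x\<in>K. d (h x) (w i x) < \<delta>}" using wG i K(2) by (auto simp: PiE_iff)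
    moreover have "openin TG {h \<in> G. \<forall>x\<in>K. d (h x) (w i x) < \<delta>}" by (rule cyl_open[OF K(1)])
    ultimately obtain y where "y \<in> ex ` H" "y \<in> {h \<in> G. \<forall>x\<in>K. d (h x) (w i x) < \<delta>}"
      unfolding in_closure_of by meson
    then show ?thesis by blast
  qed
  then obtain u where u: "\<And>i. i<n \<Longrightarrow> u i \<in> H \<and> (\<forall>x\<in>K. d (ex (u i) x) (w i x) < \<delta>)" by metis
  have u': "restrict u {..<n} \<in> PiE {..<n} (\<lambda>_. H)" using u by auto
  have "\<forall>i<n. \<forall>x\<in>K. d (Ext n (restrict u {..<n}) i x) (w i x) < \<delta>" using u by (simp add: Ext_def)
  then have "Ext n (restrict u {..<n}) \<in> V"
    using KV Ext_in[OF u'] by blast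
  then show ?thesis using u' by blast
qed

lemma ud_trans:
  assumes a: "a \<in> G" and b: "b \<in> G"
  shows "unif_dist d (g0 \<circ> inv a \<circ> b) b = unif_dist d g0 a"
proof -
  define h where "h = inv a \<circ> b"
  have sa: "surj a" using G_bij[OF a] by (simp add: bij_is_surj)
  have sh: "surj h" unfolding h_def using G_bij[OF a] G_bij[OF b]
    by (metis bij_betw_comp_iff bij_imp_bij_inv bij_is_surj)
  have eq: "(\<lambda>x. d ((g0 \<circ> inv a \<circ> b) x) (b x)) = (\<lambda>z. d (g0 z) (a z)) \<circ> h"
    using sa by (auto simp: h_def surj_f_inv_f)
  have "unif_dist d (g0 \<circ> inv a \<circ> b) b = Sup ((\<lambda>x. d ((g0 \<circ> inv a \<circ> b) x) (b x)) ` UNIV)"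
    unfolding unif_dist_def by (rule refl)
  also have "\<dots> = Sup (((\<lambda>z. d (g0 z) (a z)) \<circ> h) ` UNIV)" by (simp only: eq)
  also have "\<dots> = Sup ((\<lambda>z. d (g0 z) (a z)) ` (range h))" by (simp only: image_comp[symmetric])
  finally have "unif_dist d (g0 \<circ> inv a \<circ> b) b = Sup ((\<lambda>z. d (g0 z) (a z)) ` (range h))" .
  also have "\<dots> = unif_dist d g0 a" using sh unfolding unif_dist_def by simp
  finally show ?thesis .
qed

lemma trans_in:
  assumes "g \<in> PiE {..<n} (\<lambda>_. G)" "u \<in> PiE {..<n} (\<lambda>_. H)" "v \<in> PiE {..<n} (\<lambda>_. H)"
  shows "trans n g u v \<in> PiE {..<n} (\<lambda>_. G)"
  using assms by (auto simp: trans_def PiE_iff intro!: G_comp G_inv ex_in)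

lemma trans_td:
  assumes "g \<in> PiE {..<n} (\<lambda>_. G)" "u \<in> PiE {..<n} (\<lambda>_. H)" "v \<in> PiE {..<n} (\<lambda>_. H)"
  shows "tuple_dist d n (trans n g u v) (Ext n v) = tuple_dist d n g (Ext n u)"
proof -
  have "(\<lambda>i. unif_dist d (trans n g u v i) (Ext n v i)) ` {..<n} = (\<lambda>i. unif_dist d (g i) (Ext n u i)) ` {..<n}"
  proof (rule image_cong[OF refl])
    fix i assume i: "i \<in> {..<n}"
    have "ex (u i) \<in> G" "ex (v i) \<in> G" using assms i by (auto simp: PiE_iff ex_in)
    then show "unif_dist d (trans n g u v i) (Ext n v i) = unif_dist d (g i) (Ext n u i)"
      using i by (simp add: trans_def Ext_def ud_trans)
  qed
  then show ?thesis unfolding tuple_dist_def by simp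
qed

lemma translate_open:
  assumes "openin (power_top TG n) V" "g \<in> V" "u \<in> PiE {..<n} (\<lambda>_. H)"
  shows "\<exists>Fs. finite Fs \<and> Fs \<subseteq> N \<and> (\<forall>v\<in>box n Fs u. trans n g u v \<in> V)"
proof -
  have gG: "g \<in> PiE {..<n} (\<lambda>_. G)"
    using openin_subset[OF assms(1)] assms(2) by (auto simp: top_pow topG)
  obtain K \<delta> where K: "finite K" "\<delta> > 0"
    and KV: "\<forall>w'\<in>PiE {..<n} (\<lambda>_. G). (\<forall>i<n. \<forall>x\<in>K. d (w' i x) (g i x) < \<delta>) \<longrightarrow> w' \<in> V"
    using G_nbhd[OF assms(1,2)] by blast
  have "\<exists>y\<in>N. d x y < \<delta>/2" for x using denseN[of "\<delta>/2"] K(2) by simp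
  then obtain y where y: "\<And>x. y x \<in> N \<and> d x (y x) < \<delta>/2" by metis
  define Fs where "Fs = y ` K"
  have "finite Fs" "Fs \<subseteq> N" using K(1) y by (auto simp: Fs_def)
  moreover have "trans n g u v \<in> V" if v: "v \<in> box n Fs u" for v
  proof -
    have vH: "v \<in> PiE {..<n} (\<lambda>_. H)" using v by (auto simp: box_def)
    have "d (trans n g u v i x) (g i x) < \<delta>" if i: "i<n" and x: "x \<in> K" for i x
    proof -
      define a where "a = ex (u i)"
      define b where "b = ex (v i)"
      have aG: "a \<in> G" and bG: "b \<in> G" using assms(3) vH i by (auto simp: a_def b_def PiE_iff ex_in)
      have giG: "g i \<in> G" using gG i by auto
      have ba: "b (y x) = a (y x)"
      proof -
        have "y x \<in> Fs" using x by (simp add: Fs_def)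
        then have "v i (y x) = u i (y x)" using v i by (auto simp: box_def)
        then show ?thesis using assms(3) vH i y[of x] by (auto simp: a_def b_def PiE_iff ex_agree)
      qed
      have ia: "inv a (a x) = x" using G_bij[OF aG] by (simp add: bij_is_inj)
      have "d (trans n g u v i x) (g i x) = d (g i (inv a (b x))) (g i x)"
        using i by (simp add: trans_def a_def b_def)
      also have "\<dots> = d (g i (inv a (b x))) (g i (inv a (a x)))" by (simp only: ia)
      also have "\<dots> = d (inv a (b x)) (inv a (a x))" by (rule G_iso[OF giG])
      also have "\<dots> = d (b x) (a x)" by (rule G_iso[OF G_inv[OF aG]])
      also have "\<dots> \<le> d (b x) (b (y x)) + d (b (y x)) (a x)" by (rule M.triangle) auto
      also have "d (b (y x)) (a x) \<le> d (b (y x)) (a (y x)) + d (a (y x)) (a x)" by (rule M.triangle) auto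
      also have "d (b x) (b (y x)) = d x (y x)" by (rule G_iso[OF bG])
      also have "d (a (y x)) (a x) = d (y x) x" by (rule G_iso[OF aG])
      finally have "d (trans n g u v i x) (g i x) \<le> d x (y x) + d (y x) x" by (simp add: ba)
      then show ?thesis using y[of x] M.commute[of x "y x"] by linarith
    qed
    then show ?thesis using KV trans_in[OF gG assms(3) vH] by blast
  qed
  ultimately show ?thesis by blast
qed

end



locale main_ctx = setting +
  fixes n :: nat and \<epsilon> :: real and Op :: "nat \<Rightarrow> (nat \<Rightarrow> 'a \<Rightarrow> 'a) set"
  assumes epos: "\<epsilon> > 0"
    and Op_open: "\<And>m. openin (power_top TH n) (Op m)"
    and Op_dense: "\<And>m V. openin (power_top TH n) V \<Longrightarrow> V \<noteq> {} \<Longrightarrow> V \<inter> Op m \<noteq> {}"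
begin

interpretation M: Metric_space UNIV d by (rule ms)

definition E :: "nat \<Rightarrow> 'a set" where "E m = from_nat_into N ` {..<m} \<inter> N"

lemma E_fin: "finite (E m)" and E_sub: "E m \<subseteq> N"
  by (auto simp: E_def)

lemma E_cover: "x \<in> N \<Longrightarrow> x \<in> E (Suc (to_nat_on N x))"
  using countN unfolding E_def by (auto intro!: image_eqI[of _ _ "to_nat_on N x"])

definition okb :: "nat \<Rightarrow> 'a set \<Rightarrow> (nat \<Rightarrow> 'a \<Rightarrow> 'a) \<Rightarrow> bool" where
  "okb m Fs \<sigma> \<longleftrightarrow> finite Fs \<and> Fs \<subseteq> N \<and> box n Fs \<sigma> \<noteq> {} \<and> box n Fs \<sigma> \<subseteq> Op m \<and> E m \<subseteq> Fs \<and> (\<forall>i<n. E m \<subseteq> \<sigma> i ` Fs)"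

fun okn :: "(nat \<times> 'a set \<times> (nat \<Rightarrow> 'a \<Rightarrow> 'a)) option \<Rightarrow> bool" where
  "okn None = True"
| "okn (Some (m, Fs, \<sigma>)) = okb m Fs \<sigma>"

fun Qn :: "(nat \<times> 'a set \<times> (nat \<Rightarrow> 'a \<Rightarrow> 'a)) option \<Rightarrow> (nat \<Rightarrow> 'a \<Rightarrow> 'a) set" where
  "Qn None = topspace (power_top TG n)"
| "Qn (Some (m, Fs, \<sigma>)) = (if finite Fs \<and> Fs \<subseteq> N then nb n (box n Fs \<sigma>) \<epsilon> else {})"

fun chn :: "(nat \<times> 'a set \<times> (nat \<Rightarrow> 'a \<Rightarrow> 'a)) option \<Rightarrow> (nat \<times> 'a set \<times> (nat \<Rightarrow> 'a \<Rightarrow> 'a)) option \<Rightarrow> bool" where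
  "chn None t = (\<exists>Fs \<sigma>. t = Some (0, Fs, \<sigma>) \<and> okb 0 Fs \<sigma>)"
| "chn (Some (m, Fs, \<sigma>)) t = (\<exists>Fs' \<sigma>'. t = Some (Suc m, Fs', \<sigma>') \<and> okb (Suc m) Fs' \<sigma>' \<and> box n Fs' \<sigma>' \<subseteq> box n Fs \<sigma>)"

lemma Qn_open: "openin (power_top TG n) (Qn s)"
proof (cases s)
  case None then show ?thesis by simp
next
  case (Some a)
  then obtain m Fs \<sigma> where "s = Some (m, Fs, \<sigma>)" by (cases a) auto
  then show ?thesis using nb_box_open epos by simp
qed

lemma box_anti: "Fs \<subseteq> Fs' \<Longrightarrow> box n Fs' \<sigma> \<subseteq> box n Fs \<sigma>"
  by (auto simp: box_def)

lemma self_box: "u \<in> PiE {..<n} (\<lambda>_. H) \<Longrightarrow> u \<in> box n Fs u"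
  by (simp add: box_def)

lemma step:
  assumes V: "openin (power_top TG n) V" "g \<in> V"
    and B: "openin (power_top TH n) B" "u \<in> B"
    and td: "tuple_dist d n g (Ext n u) < \<epsilon>"
  shows "\<exists>Fs' \<sigma>'. okb k Fs' \<sigma>' \<and> box n Fs' \<sigma>' \<subseteq> B \<and> V \<inter> nb n (box n Fs' \<sigma>') \<epsilon> \<noteq> {}"
proof -
  have uH: "u \<in> PiE {..<n} (\<lambda>_. H)" using openin_subset[OF B(1)] B(2) by (auto simp: top_pow topH)
  have gG: "g \<in> PiE {..<n} (\<lambda>_. G)" using openin_subset[OF V(1)] V(2) by (auto simp: top_pow topG)
  obtain Fc where Fc: "finite Fc" "Fc \<subseteq> N" "\<forall>v\<in>box n Fc u. trans n g u v \<in> V"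
    using translate_open[OF V uH] by blast
  have U1: "openin (power_top TH n) (box n Fc u \<inter> B)" using box_open[OF Fc(1,2)] B(1) by (rule openin_Int)
  have "u \<in> box n Fc u \<inter> B" using self_box[OF uH] B(2) by blast
  then have "box n Fc u \<inter> B \<inter> Op k \<noteq> {}" using Op_dense[OF U1] by blast
  then obtain u' where u': "u' \<in> box n Fc u" "u' \<in> B" "u' \<in> Op k" by blast
  have u'H: "u' \<in> PiE {..<n} (\<lambda>_. H)" using u'(1) by (auto simp: box_def)
  have "openin (power_top TH n) (Op k \<inter> B)" using Op_open B(1) by (rule openin_Int)
  then obtain Fo where Fo: "finite Fo" "Fo \<subseteq> N" "box n Fo u' \<subseteq> Op k \<inter> B"
  proof -
    have "u' \<in> Op k \<inter> B" using u' by blast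
    from box_nbhd[OF \<open>openin (power_top TH n) (Op k \<inter> B)\<close> this] show ?thesis using that by blast
  qed
  define Fs' where "Fs' = Fo \<union> E k \<union> (\<Union>i<n. inv_into N (u' i) ` E k)"
  have bij: "bij_betw (u' i) N N" if "i<n" for i
  proof -
    have "u' i \<in> H" using u'H that by (auto simp: PiE_iff)
    then show ?thesis by (rule H_bij)
  qed
  have finF: "finite Fs'" using Fo(1) E_fin by (auto simp: Fs'_def)
  have subF: "Fs' \<subseteq> N"
  proof -
    have "inv_into N (u' i) y \<in> N" if "i<n" "y \<in> E k" for i y
      using bij[OF that(1)] E_sub that(2) by (metis bij_betw_imp_surj_on inv_into_into subsetD)
    then show ?thesis using Fo(2) E_sub by (auto simp: Fs'_def)
  qed
  have bsub: "box n Fs' u' \<subseteq> Op k \<inter> B" using box_anti[of Fo Fs'] Fo(3) by (auto simp: Fs'_def)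
  have u'in: "u' \<in> box n Fs' u'" using self_box[OF u'H] .
  have Esub: "E k \<subseteq> u' i ` Fs'" if i: "i<n" for i
  proof
    fix y assume y: "y \<in> E k"
    then have "y \<in> u' i ` N" using bij[OF i] E_sub by (auto simp: bij_betw_def)
    then have "u' i (inv_into N (u' i) y) = y" by (rule f_inv_into_f)
    moreover have "inv_into N (u' i) y \<in> Fs'" using i y by (auto simp: Fs'_def)
    ultimately show "y \<in> u' i ` Fs'" by (metis imageI)
  qed
  have "okb k Fs' u'" unfolding okb_def using finF subF u'in bsub Esub by (auto simp: Fs'_def)
  moreover have "trans n g u u' \<in> V \<inter> nb n (box n Fs' u') \<epsilon>"
  proof -
    have "trans n g u u' \<in> V" using Fc(3) u'(1) by blast
    moreover have "tuple_dist d n (trans n g u u') (Ext n u') < \<epsilon>" using trans_td[OF gG uH u'H] td by simp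
    ultimately show ?thesis unfolding nb_def using trans_in[OF gG uH u'H] u'in by blast
  qed
  ultimately show ?thesis using bsub by blast
qed

lemma td_self: "tuple_dist d n x x < \<epsilon>"
proof -
  have "unif_dist d (x i) (x i) \<le> 0" for i by (rule ud_le) simp
  then show ?thesis using epos by (subst td_lt[OF epos]) (auto intro: le_less_trans)
qed

lemma dens:
  assumes "okn s" "openin (power_top TG n) V" "V \<noteq> {}" "V \<subseteq> Qn s"
  shows "\<exists>t. chn s t \<and> okn t \<and> V \<inter> Qn t \<noteq> {}"
proof (cases s)
  case None
  obtain u where u: "u \<in> PiE {..<n} (\<lambda>_. H)" "Ext n u \<in> V" using Ext_dense[OF assms(2,3)] by blast
  have B: "openin (power_top TH n) (topspace (power_top TH n))" by simp
  have "u \<in> topspace (power_top TH n)" using u(1) by (simp add: top_pow topH)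
  then obtain Fs' \<sigma>' where F: "okb 0 Fs' \<sigma>'" "V \<inter> nb n (box n Fs' \<sigma>') \<epsilon> \<noteq> {}"
    using step[OF assms(2) u(2) B _ td_self, of 0] by blast
  then have "chn s (Some (0, Fs', \<sigma>')) \<and> okn (Some (0, Fs', \<sigma>')) \<and> V \<inter> Qn (Some (0, Fs', \<sigma>')) \<noteq> {}"
    using None by (simp add: okb_def)
  then show ?thesis by blast
next
  case (Some a)
  then obtain m Fs \<sigma> where s: "s = Some (m, Fs, \<sigma>)" by (cases a) auto
  have ok: "okb m Fs \<sigma>" using assms(1) s by simp
  obtain g where g: "g \<in> V" using assms(3) by blast
  then have "g \<in> nb n (box n Fs \<sigma>) \<epsilon>" using assms(4) s ok by (auto simp: okb_def split: if_splits)
  then obtain c where c: "c \<in> box n Fs \<sigma>" "tuple_dist d n g (Ext n c) < \<epsilon>" unfolding nb_def by blast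
  have B: "openin (power_top TH n) (box n Fs \<sigma>)" using ok box_open by (simp add: okb_def)
  obtain Fs' \<sigma>' where F: "okb (Suc m) Fs' \<sigma>'" "box n Fs' \<sigma>' \<subseteq> box n Fs \<sigma>" "V \<inter> nb n (box n Fs' \<sigma>') \<epsilon> \<noteq> {}"
    using step[OF assms(2) g B c(1,2), of "Suc m"] by blast
  then have "chn s (Some (Suc m, Fs', \<sigma>')) \<and> okn (Some (Suc m, Fs', \<sigma>')) \<and> V \<inter> Qn (Some (Suc m, Fs', \<sigma>')) \<noteq> {}"
    using s by (simp add: okb_def)
  then show ?thesis by blast
qed

end



context main_ctx begin

interpretation M: Metric_space UNIV d by (rule ms)

lemma limit:
  assumes g: "g \<in> PiE {..<n} (\<lambda>_. G)" and br0: "\<sigma> 0 = None"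
    and br: "\<forall>m. chn (\<sigma> m) (\<sigma> (Suc m)) \<and> g \<in> Qn (\<sigma> m)"
  shows "\<exists>a\<in>PiE {..<n} (\<lambda>_. H). (\<forall>m. a \<in> Op m) \<and> tuple_dist d n g (Ext n a) \<le> \<epsilon>"
proof -
  have shape: "\<exists>Fs \<tau>. \<sigma> (Suc m) = Some (m, Fs, \<tau>) \<and> okb m Fs \<tau>" for m
  proof (induction m)
    case 0
    have "chn (\<sigma> 0) (\<sigma> (Suc 0))" using br by blast
    then show ?case using br0 by simp
  next
    case (Suc m)
    then obtain Fs \<tau> where st: "\<sigma> (Suc m) = Some (m, Fs, \<tau>)" by blast
    have "chn (\<sigma> (Suc m)) (\<sigma> (Suc (Suc m)))" using br by blast
    then show ?case using st by auto
  qed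
  then obtain FF TT where FT: "\<And>m. \<sigma> (Suc m) = Some (m, FF m, TT m) \<and> okb m (FF m) (TT m)" by metis
  define Bx where "Bx m = box n (FF m) (TT m)" for m
  have ok: "finite (FF m)" "FF m \<subseteq> N" "Bx m \<subseteq> Op m" "E m \<subseteq> FF m" "\<forall>i<n. E m \<subseteq> TT m i ` FF m" for m
    using FT[of m] by (auto simp: okb_def Bx_def)
  have nest: "Bx (Suc m) \<subseteq> Bx m" for m
  proof -
    have "chn (\<sigma> (Suc m)) (\<sigma> (Suc (Suc m)))" using br by blast
    then show ?thesis using FT[of m] FT[of "Suc m"] by (simp add: Bx_def)
  qed
  have anti: "m \<le> m' \<Longrightarrow> Bx m' \<subseteq> Bx m" for m m'
    by (rule lift_Suc_antimono_le[of Bx, OF nest])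
  have "\<exists>c\<in>Bx m. tuple_dist d n g (Ext n c) < \<epsilon>" for m
  proof -
    have "g \<in> Qn (\<sigma> (Suc m))" using br by blast
    then have "g \<in> nb n (Bx m) \<epsilon>" using FT[of m] ok(1,2)[of m] by (simp add: Bx_def)
    then show ?thesis unfolding nb_def by blast
  qed
  then obtain c where c: "\<And>m. c m \<in> Bx m" "\<And>m. tuple_dist d n g (Ext n (c m)) < \<epsilon>" by metis
  have cH: "c m i \<in> H" if "i<n" for m i using c(1)[of m] that by (auto simp: Bx_def box_def PiE_iff)
  have cB: "c m i x = TT m' i x" if "m' \<le> m" "i<n" "x \<in> FF m'" for m m' i x
  proof -
    have "c m \<in> Bx m'" using c(1)[of m] anti[OF that(1)] by blast
    then show ?thesis using that(2,3) by (auto simp: Bx_def box_def)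
  qed
  define kx where "kx x = Suc (to_nat_on N x)" for x
  have kxE: "x \<in> FF (kx x)" if "x \<in> N" for x using E_cover[OF that] ok(4) unfolding kx_def by blast
  define a where "a = (\<lambda>i\<in>{..<n}. restrict (\<lambda>x. TT (kx x) i x) N)"
  have stab: "c m i x = a i x" if "x \<in> N" "i<n" "kx x \<le> m" for x i m
    using cB[OF that(3) that(2) kxE[OF that(1)]] that by (simp add: a_def)
  have aFF: "a i x = TT m i x" if "i<n" "x \<in> FF m" for i x m
  proof -
    have xN: "x \<in> N" using ok(2) that(2) by blast
    have "a i x = c (max m (kx x)) i x" using stab[OF xN that(1)] by simp
    also have "\<dots> = TT m i x" using cB[of m "max m (kx x)" i x] that by simp
    finally show ?thesis .
  qed
  have finstab: "\<exists>K. \<forall>m\<ge>K. \<forall>x\<in>S. \<forall>i<n. c m i x = a i x" if "finite S" "S \<subseteq> N" for S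
  proof (intro exI allI impI ballI)
    fix m x i assume m: "Max (insert 0 (kx ` S)) \<le> m" and x: "x \<in> S" and i: "i < n"
    have "kx x \<le> Max (insert 0 (kx ` S))" using that(1) x by (intro Max_ge) auto
    then show "c m i x = a i x" using stab[of x i m] x i m that(2) by auto
  qed
  have aH: "a i \<in> H" if i: "i<n" for i
  proof -
    have ext: "a i \<in> extensional N" using i by (simp add: a_def)
    have maps: "a i x \<in> N" if "x \<in> N" for x
      using stab[OF that i le_refl] H_maps[OF cH[OF i] that] by metis
    have inj: "inj_on (a i) N"
    proof (rule inj_onI)
      fix x y assume xy: "x \<in> N" "y \<in> N" "a i x = a i y"
      define m where "m = max (kx x) (kx y)"
      have "c m i x = c m i y" using stab[of x i m] stab[of y i m] xy i by (simp add: m_def)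
      moreover have "inj_on (c m i) N" using H_bij[OF cH[OF i]] by (simp add: bij_betw_def)
      ultimately show "x = y" using xy(1,2) by (simp add: inj_on_def)
    qed
    have onto: "N \<subseteq> a i ` N"
    proof
      fix y assume y: "y \<in> N"
      have "y \<in> E (kx y)" using E_cover[OF y] by (simp add: kx_def)
      then obtain x where x: "x \<in> FF (kx y)" "y = TT (kx y) i x" using ok(5)[of "kx y"] i by blast
      then have "a i x = y" using aFF[OF i x(1)] by simp
      moreover have "x \<in> N" using x(1) ok(2) by blast
      ultimately show "y \<in> a i ` N" by blast
    qed
    have bij: "bij_betw (a i) N N" unfolding bij_betw_def using inj onto maps by blast
    have Rp: "R r (map (a i) xs) \<longleftrightarrow> R r xs" if xsN: "set xs \<subseteq> N" "length xs = arR r" for r xs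
    proof -
      obtain K where K: "\<forall>m\<ge>K. \<forall>x\<in>set xs. \<forall>i<n. c m i x = a i x" using finstab[OF finite_set xsN(1)] by blast
      have "map (a i) xs = map (c K i) xs" using K i by (intro map_cong) auto
      moreover have "R r (map (c K i) xs) \<longleftrightarrow> R r xs" using cH[OF i, of K] xsN by (simp add: AutN_def)
      ultimately show ?thesis by (simp only:)
    qed
    have Fp: "a i (F k xs) = F k (map (a i) xs)" if "set xs \<subseteq> N" "length xs = arG k" for k xs
    proof -
      have FN: "F k xs \<in> N" using classical that unfolding classical_structure_def by blast
      have fS: "finite (insert (F k xs) (set xs))" "insert (F k xs) (set xs) \<subseteq> N" using that(1) FN by auto
      obtain K where K: "\<forall>m\<ge>K. \<forall>x\<in>insert (F k xs) (set xs). \<forall>i<n. c m i x = a i x"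
        using finstab[OF fS] by blast
      have "map (a i) xs = map (c K i) xs" using K i by (intro map_cong) auto
      moreover have "a i (F k xs) = c K i (F k xs)" using K i by auto
      moreover have "c K i (F k xs) = F k (map (c K i) xs)" using cH[OF i, of K] that by (simp add: AutN_def)
      ultimately show ?thesis by (simp only:)
    qed
    show ?thesis unfolding AutN_def using ext bij Rp Fp by blast
  qed
  have aPi: "a \<in> PiE {..<n} (\<lambda>_. H)" using aH by (auto simp: a_def)
  have aB: "a \<in> Bx m" for m using aPi aFF by (auto simp: Bx_def box_def)
  have aOp: "\<forall>m. a \<in> Op m" using aB ok(3) by blast
  have "tuple_dist d n g (Ext n a) \<le> \<epsilon>"
  proof (rule td_le)
    show "0 \<le> \<epsilon>" using epos by simp
  next
    fix i assume i: "i < n"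
    have "d (g i x) (ex (a i) x) \<le> \<epsilon>" for x
    proof (rule field_le_epsilon)
      fix \<eta> :: real assume eta: "0 < \<eta>"
      obtain y where y: "y \<in> N" "d x y < \<eta>/2" using denseN[of "\<eta>/2"] eta by auto
      define m where "m = kx y"
      have giG: "g i \<in> G" using g i by auto
      have ay: "ex (a i) y = ex (c m i) y"
        using ex_agree[OF aH[OF i] y(1)] ex_agree[OF cH[OF i] y(1)] stab[OF y(1) i] by (simp add: m_def)
      have "d (g i y) (ex (c m i) y) \<le> unif_dist d (g i) (ex (c m i))" by (rule ud_ge)
      also have "\<dots> < \<epsilon>" using c(2)[of m] epos i by (simp add: td_lt Ext_def)
      finally have mid: "d (g i y) (ex (a i) y) < \<epsilon>" using ay by simp
      have "d (g i x) (ex (a i) x) \<le> d (g i x) (g i y) + d (g i y) (ex (a i) x)" by (rule M.triangle) auto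
      also have "d (g i y) (ex (a i) x) \<le> d (g i y) (ex (a i) y) + d (ex (a i) y) (ex (a i) x)" by (rule M.triangle) auto
      also have "d (g i x) (g i y) = d x y" by (rule G_iso[OF giG])
      also have "d (ex (a i) y) (ex (a i) x) = d y x" by (rule G_iso[OF ex_in[OF aH[OF i]]])
      finally have "d (g i x) (ex (a i) x) \<le> d x y + (d (g i y) (ex (a i) y) + d y x)" by simp
      then show "d (g i x) (ex (a i) x) \<le> \<epsilon> + \<eta>" using mid y(2) M.commute[of x y] by linarith
    qed
    then show "unif_dist d (g i) (Ext n a i) \<le> \<epsilon>" using i by (simp add: Ext_def ud_le)
  qed
  then show ?thesis using aPi aOp by blast
qed

lemma main_W:
  "\<exists>W::nat \<Rightarrow> (nat \<Rightarrow> 'a \<Rightarrow> 'a) set. (\<forall>m. openin (power_top TG n) (W m)) \<and>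
     (\<forall>m V. openin (power_top TG n) V \<longrightarrow> V \<noteq> {} \<longrightarrow> V \<inter> W m \<noteq> {}) \<and>
     (\<forall>g\<in>topspace (power_top TG n) \<inter> (\<Inter>m. W m). \<exists>a\<in>PiE {..<n} (\<lambda>_. H). (\<forall>m. a \<in> Op m) \<and> tuple_dist d n g (Ext n a) \<le> \<epsilon>)"
proof -
  have r: "Qn None = topspace (power_top TG n)" "okn None" by simp_all
  have ex: "\<exists>W::nat \<Rightarrow> (nat \<Rightarrow> 'a \<Rightarrow> 'a) set. (\<forall>m. openin (power_top TG n) (W m)) \<and>
     (\<forall>m V. openin (power_top TG n) V \<longrightarrow> V \<noteq> {} \<longrightarrow> V \<inter> W m \<noteq> {}) \<and>
     (\<forall>g \<in> topspace (power_top TG n) \<inter> (\<Inter>m. W m). \<exists>\<sigma>. \<sigma> 0 = None \<and> (\<forall>m. chn (\<sigma> m) (\<sigma> (Suc m)) \<and> g \<in> Qn (\<sigma> m)))"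
    by (rule tree_dense_opens[of "power_top TG n" Qn None okn chn, OF Qn_open r dens])
  then obtain W :: "nat \<Rightarrow> (nat \<Rightarrow> 'a \<Rightarrow> 'a) set" where W0: "(\<forall>m. openin (power_top TG n) (W m)) \<and>
     (\<forall>m V. openin (power_top TG n) V \<longrightarrow> V \<noteq> {} \<longrightarrow> V \<inter> W m \<noteq> {}) \<and>
     (\<forall>g \<in> topspace (power_top TG n) \<inter> (\<Inter>m. W m). \<exists>\<sigma>. \<sigma> 0 = None \<and> (\<forall>m. chn (\<sigma> m) (\<sigma> (Suc m)) \<and> g \<in> Qn (\<sigma> m)))"
    by blast
  note W = W0[THEN conjunct1] W0[THEN conjunct2, THEN conjunct1] W0[THEN conjunct2, THEN conjunct2]
  have "\<exists>a\<in>PiE {..<n} (\<lambda>_. H). (\<forall>m. a \<in> Op m) \<and> tuple_dist d n g (Ext n a) \<le> \<epsilon>"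
    if g: "g\<in>topspace (power_top TG n) \<inter> (\<Inter>m. W m)" for g
  proof -
    obtain \<sigma> where "\<sigma> 0 = None" "\<forall>m. chn (\<sigma> m) (\<sigma> (Suc m)) \<and> g \<in> Qn (\<sigma> m)" using W(3) g by blast
    moreover have "g \<in> PiE {..<n} (\<lambda>_. G)" using g by (simp add: top_pow topG)
    ultimately show ?thesis using limit by blast
  qed
  then show ?thesis using W(1,2) by blast
qed

end



context setting begin

lemma part1:
  assumes A: "comeagre_in (power_top TH n) A"
  shows "comeagre_in (power_top TG n) (tuple_dclosure d G n ((\<lambda>hs. \<lambda>i\<in>{..<n}. ex (hs i)) ` A))"
proof -
  obtain Op :: "nat \<Rightarrow> (nat \<Rightarrow> 'a \<Rightarrow> 'a) set" where
    Op: "\<forall>m. openin (power_top TH n) (Op m)" "\<forall>m V. openin (power_top TH n) V \<longrightarrow> V \<noteq> {} \<longrightarrow> V \<inter> Op m \<noteq> {}"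
        "topspace (power_top TH n) \<inter> (\<Inter>m. Op m) \<subseteq> A"
    using meagre_dense_opens[OF A] by (elim exE conjE) (rule that)
  have exk: "\<exists>W::nat \<Rightarrow> (nat \<Rightarrow> 'a \<Rightarrow> 'a) set. (\<forall>m. openin (power_top TG n) (W m)) \<and>
     (\<forall>m V. openin (power_top TG n) V \<longrightarrow> V \<noteq> {} \<longrightarrow> V \<inter> W m \<noteq> {}) \<and>
     (\<forall>g\<in>topspace (power_top TG n) \<inter> (\<Inter>m. W m). \<exists>a\<in>PiE {..<n} (\<lambda>_. H). (\<forall>m. a \<in> Op m) \<and> tuple_dist d n g (Ext n a) \<le> 1 / real (Suc k))"
    if "True" for k
  proof -
    interpret mc: main_ctx d arP P arF f N arR R arG F n "1 / real (Suc k)" Op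
      by (intro main_ctx.intro setting_axioms main_ctx_axioms.intro) (use Op in auto)
    show ?thesis by (rule mc.main_W)
  qed
  then have "\<forall>k. \<exists>W::nat \<Rightarrow> (nat \<Rightarrow> 'a \<Rightarrow> 'a) set. (\<forall>m. openin (power_top TG n) (W m)) \<and>
     (\<forall>m V. openin (power_top TG n) V \<longrightarrow> V \<noteq> {} \<longrightarrow> V \<inter> W m \<noteq> {}) \<and>
     (\<forall>g\<in>topspace (power_top TG n) \<inter> (\<Inter>m. W m). \<exists>a\<in>PiE {..<n} (\<lambda>_. H). (\<forall>m. a \<in> Op m) \<and> tuple_dist d n g (Ext n a) \<le> 1 / real (Suc k))"
    by (intro allI exk TrueI)
  then have "\<exists>WW::nat \<Rightarrow> nat \<Rightarrow> (nat \<Rightarrow> 'a \<Rightarrow> 'a) set. \<forall>k. (\<forall>m. openin (power_top TG n) (WW k m)) \<and>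
     (\<forall>m V. openin (power_top TG n) V \<longrightarrow> V \<noteq> {} \<longrightarrow> V \<inter> WW k m \<noteq> {}) \<and>
     (\<forall>g\<in>topspace (power_top TG n) \<inter> (\<Inter>m. WW k m). \<exists>a\<in>PiE {..<n} (\<lambda>_. H). (\<forall>m. a \<in> Op m) \<and> tuple_dist d n g (Ext n a) \<le> 1 / real (Suc k))"
    by (rule choice)
  then obtain WW :: "nat \<Rightarrow> nat \<Rightarrow> (nat \<Rightarrow> 'a \<Rightarrow> 'a) set" where WW0:
    "\<forall>k. (\<forall>m. openin (power_top TG n) (WW k m)) \<and>
     (\<forall>m V. openin (power_top TG n) V \<longrightarrow> V \<noteq> {} \<longrightarrow> V \<inter> WW k m \<noteq> {}) \<and>
     (\<forall>g\<in>topspace (power_top TG n) \<inter> (\<Inter>m. WW k m). \<exists>a\<in>PiE {..<n} (\<lambda>_. H). (\<forall>m. a \<in> Op m) \<and> tuple_dist d n g (Ext n a) \<le> 1 / real (Suc k))"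
    by (elim exE) (rule that)
  have WW1: "openin (power_top TG n) (WW k m)" for k m
    by (rule spec[OF conjunct1[OF spec[OF WW0, of k]]])
  have WW2: "V \<inter> WW k m \<noteq> {}" if "openin (power_top TG n) V" "V \<noteq> {}" for k m V
    using spec[OF spec[OF conjunct1[OF conjunct2[OF spec[OF WW0, of k]]], of m], of V] that by (simp only: simp_thms)
  have WW3: "\<exists>a\<in>PiE {..<n} (\<lambda>_. H). (\<forall>m. a \<in> Op m) \<and> tuple_dist d n g (Ext n a) \<le> 1 / real (Suc k)"
    if "g \<in> topspace (power_top TG n) \<inter> (\<Inter>m. WW k m)" for k g
    by (rule bspec[OF conjunct2[OF conjunct2[OF spec[OF WW0, of k]]] that])
  define W2 where "W2 p = WW (fst p) (snd p)" for p :: "nat \<times> nat"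
  show ?thesis
  proof (rule comeagre_of_dense_opens[of "UNIV :: (nat \<times> nat) set" _ W2])
    show "countable (UNIV :: (nat \<times> nat) set)" by simp
    show "openin (power_top TG n) (W2 p)" for p unfolding W2_def by (rule WW1)
    show "V \<inter> W2 p \<noteq> {}" if "openin (power_top TG n) V" "V \<noteq> {}" for p V
      unfolding W2_def by (rule WW2[OF that])
    show "tuple_dclosure d G n ((\<lambda>hs. \<lambda>i\<in>{..<n}. ex (hs i)) ` A) \<subseteq> topspace (power_top TG n)"
      unfolding tuple_dclosure_def top_pow topG by (rule Collect_restrict)
    show "topspace (power_top TG n) \<inter> (\<Inter>p\<in>UNIV. W2 p) \<subseteq> tuple_dclosure d G n ((\<lambda>hs. \<lambda>i\<in>{..<n}. ex (hs i)) ` A)"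
    proof
      fix g assume g: "g \<in> topspace (power_top TG n) \<inter> (\<Inter>p\<in>UNIV. W2 p)"
      have gT: "g \<in> topspace (power_top TG n)" using g by blast
      have gW: "g \<in> WW k m" for k m
      proof -
        have "g \<in> W2 (k, m)" using g by blast
        then show ?thesis by (simp add: W2_def)
      qed
      have gk: "g \<in> topspace (power_top TG n) \<inter> (\<Inter>m. WW k m)" for k
        using gT gW by blast
      have exe: "\<exists>b\<in>(\<lambda>hs. \<lambda>i\<in>{..<n}. ex (hs i)) ` A. tuple_dist d n g b < e" if e: "e > 0" for e
      proof -
        obtain k where k: "inverse (real (Suc k)) < e" using reals_Archimedean[OF e] by blast
        obtain a where a: "a \<in> PiE {..<n} (\<lambda>_. H)" "\<forall>m. a \<in> Op m" "tuple_dist d n g (Ext n a) \<le> 1 / real (Suc k)"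
          using WW3[OF gk[of k]] by blast
        have "a \<in> topspace (power_top TH n) \<inter> (\<Inter>m. Op m)" using a(1,2) by (simp add: top_pow topH)
        then have aA: "a \<in> A" using Op(3) by blast
        have "1 / real (Suc k) < e" using k by (simp add: inverse_eq_divide)
        then have td: "tuple_dist d n g (Ext n a) < e" using a(3) by linarith
        have mem: "Ext n a \<in> (\<lambda>hs. \<lambda>i\<in>{..<n}. ex (hs i)) ` A" unfolding Ext_def using aA by (rule imageI)
        show ?thesis by (rule bexI[of "\<lambda>b. tuple_dist d n g b < e", OF td mem])
      qed
      have gG: "g \<in> PiE {..<n} (\<lambda>_. G)" using gT by (simp add: top_pow topG)
      show "g \<in> tuple_dclosure d G n ((\<lambda>hs. \<lambda>i\<in>{..<n}. ex (hs i)) ` A)"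
        unfolding tuple_dclosure_def using gG exe by blast
    qed
  qed
qed

lemma conj_ext:
  assumes k: "k \<in> H" and g: "g \<in> H" and c: "restrict (k \<circ> g \<circ> inv_into N k) N \<in> H"
  shows "ex (restrict (k \<circ> g \<circ> inv_into N k) N) = ex k \<circ> ex g \<circ> inv (ex k)"
proof (rule ex_eq[OF c])
  show "ex k \<circ> ex g \<circ> inv (ex k) \<in> G" using k g by (intro G_comp G_inv ex_in)
  fix x assume x: "x \<in> N"
  have xk: "x \<in> k ` N" using H_bij[OF k] x by (simp add: bij_betw_def)
  have yN: "inv_into N k x \<in> N" using xk by (rule inv_into_into)
  have "ex k (inv_into N k x) = x" using ex_agree[OF k yN] f_inv_into_f[OF xk] by simp
  then have "inv (ex k) x = inv_into N k x"
    using G_bij[OF ex_in[OF k]] by (metis bij_is_inj inv_f_f)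
  then show "(ex k \<circ> ex g \<circ> inv (ex k)) x = restrict (k \<circ> g \<circ> inv_into N k) N x"
    using x yN ex_agree[OF g yN] ex_agree[OF k H_maps[OF g yN]] by simp
qed

lemma part2:
  assumes "ample_generics_AutN N H TH"
  shows "topometric_ample_generics_AutM d G TG"
  unfolding topometric_ample_generics_AutM_def
proof (intro allI impI)
  fix n :: nat and e :: real assume e: "e > 0"
  obtain gs where gs: "gs \<in> PiE {..<n} (\<lambda>_. H)" "comeagre_in (power_top TH n) (diag_conj_classN H N n gs)"
    using assms unfolding ample_generics_AutN_def by blast
  let ?C = "diag_conj_classN H N n gs"
  have Csub: "?C \<subseteq> PiE {..<n} (\<lambda>_. H)" using gs(2) by (simp add: comeagre_in_def top_pow topH)
  have "tuple_dclosure d G n ((\<lambda>hs. \<lambda>i\<in>{..<n}. ex (hs i)) ` ?C) \<subseteq> tuple_nbhd d G n (diag_conj_classM G n (Ext n gs)) e"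
  proof
    fix y assume y: "y \<in> tuple_dclosure d G n ((\<lambda>hs. \<lambda>i\<in>{..<n}. ex (hs i)) ` ?C)"
    then obtain b where b: "b \<in> (\<lambda>hs. \<lambda>i\<in>{..<n}. ex (hs i)) ` ?C" "tuple_dist d n y b < e" and yG: "y \<in> PiE {..<n} (\<lambda>_. G)"
      using e unfolding tuple_dclosure_def by blast
    then obtain hs where hs: "hs \<in> ?C" "b = (\<lambda>i\<in>{..<n}. ex (hs i))" by blast
    then obtain k where k: "k \<in> H" "hs = (\<lambda>i\<in>{..<n}. restrict (k \<circ> gs i \<circ> inv_into N k) N)"
      unfolding diag_conj_classN_def by blast
    have "b = (\<lambda>i\<in>{..<n}. ex k \<circ> Ext n gs i \<circ> inv (ex k))"
    proof (rule ext)
      fix i show "b i = (\<lambda>i\<in>{..<n}. ex k \<circ> Ext n gs i \<circ> inv (ex k)) i"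
      proof (cases "i < n")
        case True
        have "hs i \<in> H" using Csub hs(1) True by (auto simp: PiE_iff)
        then have "restrict (k \<circ> gs i \<circ> inv_into N k) N \<in> H" using k(2) True by simp
        moreover have "gs i \<in> H" using gs(1) True by auto
        ultimately show ?thesis using conj_ext[OF k(1)] hs(2) k(2) True by (simp add: Ext_def)
      qed (simp add: hs(2))
    qed
    then have "b \<in> diag_conj_classM G n (Ext n gs)" unfolding diag_conj_classM_def using k(1) ex_in by blast
    then show "y \<in> tuple_nbhd d G n (diag_conj_classM G n (Ext n gs)) e"
      unfolding tuple_nbhd_def using yG b(2) by blast
  qed
  moreover have "tuple_nbhd d G n (diag_conj_classM G n (Ext n gs)) e \<subseteq> topspace (power_top TG n)"
    by (auto simp: tuple_nbhd_def top_pow topG)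
  ultimately have "comeagre_in (power_top TG n) (tuple_nbhd d G n (diag_conj_classM G n (Ext n gs)) e)"
    using comeagre_mono[OF part1[OF gs(2)]] by blast
  moreover have "Ext n gs \<in> PiE {..<n} (\<lambda>_. G)" using Ext_in[OF gs(1)] .
  ultimately show "\<exists>gs\<in>PiE {..<n} (\<lambda>_. G). comeagre_in (power_top TG n) (tuple_nbhd d G n (diag_conj_classM G n gs) e)"
    by blast
qed

end

theorem theorem5p6:
  fixes d :: "'a \<Rightarrow> 'a \<Rightarrow> real"
    and arP :: "'i \<Rightarrow> nat" and P :: "'i \<Rightarrow> 'a list \<Rightarrow> real"
    and arF :: "'j \<Rightarrow> nat" and f :: "'j \<Rightarrow> 'a list \<Rightarrow> 'a"
    and N :: "'a set"
    and arR :: "'r \<Rightarrow> nat" and R :: "'r \<Rightarrow> 'a list \<Rightarrow> bool"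
    and arG :: "'k \<Rightarrow> nat" and F :: "'k \<Rightarrow> 'a list \<Rightarrow> 'a"
  assumes "polish_metric_structure d arP P arF f"
    and "good_approx_substructure d arP P arF f N arR R arG F"
  shows "(\<forall>n A. A \<subseteq> PiE {..<n} (\<lambda>_. AutN N arR R arG F) \<longrightarrow>
              comeagre_in (power_top (tauN N arR R arG F) n) A \<longrightarrow>
              comeagre_in (power_top (tauM d arP P arF f) n)
                (tuple_dclosure d (AutM d arP P arF f) n
                   ((\<lambda>hs. \<lambda>i\<in>{..<n}. ext_aut (AutM d arP P arF f) N (hs i)) ` A)))
       \<and> (ample_generics_AutN N (AutN N arR R arG F) (tauN N arR R arG F) \<longrightarrow>
          topometric_ample_generics_AutM d (AutM d arP P arF f) (tauM d arP P arF f))"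
proof -
  interpret S: setting d arP P arF f N arR R arG F
    using assms by (rule setting.intro)
  show ?thesis
  proof (intro conjI allI impI)
    fix n A assume "comeagre_in (power_top (tauN N arR R arG F) n) A"
    then show "comeagre_in (power_top (tauM d arP P arF f) n)
                (tuple_dclosure d (AutM d arP P arF f) n
                   ((\<lambda>hs. \<lambda>i\<in>{..<n}. ext_aut (AutM d arP P arF f) N (hs i)) ` A))" by (rule S.part1)
  next
    assume "ample_generics_AutN N (AutN N arR R arG F) (tauN N arR R arG F)"
    then show "topometric_ample_generics_AutM d (AutM d arP P arF f) (tauM d arP P arF f)" by (rule S.part2)
  qed
qed



end
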